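(* Let $X$ be a space with property A, $E$ a Banach space, $p\in(1,\infty)$ and $q$ its conjugate index. For each $n\in\mathbb{N}$ let $\{\phi_i^{(n)}\}_{i\in I_n}$ be a metric $p$-partition of unity on $X$ with $(n,1/n)$-variation, and define $M_n:\mathcal{A}^p_E(X)\to\mathcal{A}^p_E(X)$ by $M_n(A)=\sum_{i\in I_n}(\phi_i^{(n)})^{p/q}A\phi_i^{(n)}$ (strongly convergent sum). Then each $M_n$ is a well-defined linear map of norm one, and $M_n(A)\to A$ in norm as $n\to\infty$ for every $A\in\mathcal{A}^p_E(X)$.
   Context: A *space* is a metric space $(X,d)$ that is strongly discrete (the set $\{d(x,y):x,y\in X\}$ is a discrete subset of $\mathbb{R}$) and has bounded geometry (for every $r>0$, $\sup_{x\in X}|B(x;r)|<\infty$). $\ell^p_E(X)$ is the Banach space of $p$-summable functions $X\to E$; a bounded function $\phi:X\to\mathbb{C}$ acts by pointwise multiplication. A bounded operator $A$ has matrix entries $A_{xy}\in\mathcal{L}(E)$, $A_{xy}e=(A(\delta_ye))(x)$; a band operator is an $X\times X$ matrix with uniformly bounded entries and finite propagation $\sup\{d(x,y):A_{xy}\ne0\}$, acting by matrix multiplication; $\mathcal{A}^p_E(X)$ is the norm closure of the band operators in $\mathcal{L}(\ell^p_E(X))$. A metric $p$-partition of unity on $X$ is a family $\{\phi_i:X\to[0,1]\}_{i\in I}$ such that (i) there is $N$ with at most $N$ of the $\phi_i(x)$ nonzero for each $x$; (ii) $\sup_i\operatorname{diam}\{x:\phi_i(x)\ne0\}<\infty$;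 (iii) $\sum_i\phi_i(x)^p=1$ for all $x$. It has $(r,\epsilon)$-variation if $d(x,y)\le r$ implies $\sum_i|\phi_i(x)-\phi_i(y)|^p<\epsilon^p$. $X$ has property A if for all $r,\epsilon>0$ there is a metric $p$-partition of unity with $(r,\epsilon)$-variation (independent of $p\in[1,\infty)$). *)

theory Defs
  imports "HOL-Analysis.Analysis"
begin

text \<open>The space X is the whole type 'x (a metric space); the type is passed via an itself argument.\<close>

definition strongly_discrete :: "'x::metric_space itself \<Rightarrow> bool" where
  "strongly_discrete _ \<longleftrightarrow>
     (let D = {dist (x::'x) y | x y. True} in
       \<forall>t\<in>D. \<exists>e>0. \<forall>s\<in>D. \<bar>s - t\<bar> < e \<longrightarrow> s = t)"

definition bounded_geometry :: "'x::metric_space itself \<Rightarrow> bool" where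
  "bounded_geometry _ \<longleftrightarrow>
     (\<forall>r>0. \<exists>N::nat. \<forall>x::'x. finite (ball x r) \<and> card (ball x r) \<le> N)"

definition nz_support :: "'i set \<Rightarrow> ('i \<Rightarrow> 'x \<Rightarrow> real) \<Rightarrow> 'x \<Rightarrow> 'i set" where
  "nz_support I \<phi> x = {i\<in>I. \<phi> i x \<noteq> 0}"

definition metric_pu :: "real \<Rightarrow> 'i set \<Rightarrow> ('i \<Rightarrow> 'x::metric_space \<Rightarrow> real) \<Rightarrow> bool" where
  "metric_pu p I \<phi> \<longleftrightarrow>
     (\<forall>i\<in>I. \<forall>x. 0 \<le> \<phi> i x \<and> \<phi> i x \<le> 1) \<and>
     (\<exists>N::nat. \<forall>x. finite (nz_support I \<phi> x) \<and> card (nz_support I \<phi> x) \<le> N) \<and>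
     (\<exists>D. \<forall>i\<in>I. \<forall>x y. \<phi> i x \<noteq> 0 \<longrightarrow> \<phi> i y \<noteq> 0 \<longrightarrow> dist x y \<le> D) \<and>
     (\<forall>x. (\<Sum>i\<in>nz_support I \<phi> x. \<phi> i x powr p) = 1)"

definition has_variation ::
  "real \<Rightarrow> 'i set \<Rightarrow> ('i \<Rightarrow> 'x::metric_space \<Rightarrow> real) \<Rightarrow> real \<Rightarrow> real \<Rightarrow> bool" where
  "has_variation p I \<phi> r \<epsilon> \<longleftrightarrow>
     (\<forall>x y. dist x y \<le> r \<longrightarrow>
        (\<Sum>i\<in>nz_support I \<phi> x \<union> nz_support I \<phi> y. \<bar>\<phi> i x - \<phi> i y\<bar> powr p) < \<epsilon> powr p)"

text \<open>Index sets are taken inside 'x \<times> nat, which loses no generality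
  (identically zero members may be dropped, and each remaining member can be
  indexed by a point of its support together with a number below the bound N).\<close>

definition property_A :: "'x::metric_space itself \<Rightarrow> real \<Rightarrow> bool" where
  "property_A _ p \<longleftrightarrow>
     (\<forall>r>0. \<forall>\<epsilon>>0. \<exists>(I::('x \<times> nat) set) (\<phi>::('x \<times> nat) \<Rightarrow> 'x \<Rightarrow> real).
         metric_pu p I \<phi> \<and> has_variation p I \<phi> r \<epsilon>)"

definition lp :: "real \<Rightarrow> ('x \<Rightarrow> 'e::real_normed_vector) set" where
  "lp p = {f. (\<lambda>x. norm (f x) powr p) summable_on UNIV}"

definition lpnorm :: "real \<Rightarrow> ('x \<Rightarrow> 'e::real_normed_vector) \<Rightarrow> real" where
  "lpnorm p f = (\<Sum>\<^sub>\<infinity>x. norm (f x) powr p) powr (1/p)"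

text \<open>Bounded linear operators on l^p_E(X); only their values on l^p matter.\<close>
definition bdd_op :: "real \<Rightarrow> (('x \<Rightarrow> 'e::real_normed_vector) \<Rightarrow> ('x \<Rightarrow> 'e)) \<Rightarrow> bool" where
  "bdd_op p T \<longleftrightarrow>
     T ` lp p \<subseteq> lp p \<and>
     (\<forall>f\<in>lp p. \<forall>g\<in>lp p. T (\<lambda>x. f x + g x) = (\<lambda>x. T f x + T g x)) \<and>
     (\<forall>c. \<forall>f\<in>lp p. T (\<lambda>x. c *\<^sub>R f x) = (\<lambda>x. c *\<^sub>R T f x)) \<and>
     (\<exists>C. \<forall>f\<in>lp p. lpnorm p (T f) \<le> C * lpnorm p f)"

definition opnorm :: "real \<Rightarrow> (('x \<Rightarrow> 'e::real_normed_vector) \<Rightarrow> ('x \<Rightarrow> 'e)) \<Rightarrow> real" where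
  "opnorm p T = Sup {lpnorm p (T f) | f. f \<in> lp p \<and> lpnorm p f \<le> 1}"

definition band_op :: "real \<Rightarrow> (('x::metric_space \<Rightarrow> 'e::real_normed_vector) \<Rightarrow> ('x \<Rightarrow> 'e)) \<Rightarrow> bool" where
  "band_op p T \<longleftrightarrow>
     (\<exists>b :: 'x \<Rightarrow> 'x \<Rightarrow> ('e \<Rightarrow>\<^sub>L 'e).
        (\<exists>C. \<forall>x y. norm (b x y) \<le> C) \<and>
        (\<exists>R. \<forall>x y. b x y \<noteq> 0 \<longrightarrow> dist x y \<le> R) \<and>
        (\<forall>f\<in>lp p. T f = (\<lambda>x. \<Sum>y\<in>{y. b x y \<noteq> 0}. blinfun_apply (b x y) (f y))))"

text \<open>A^p_E(X): the operator-norm closure of the band operators.\<close>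
definition Ap :: "real \<Rightarrow> (('x::metric_space \<Rightarrow> 'e::real_normed_vector) \<Rightarrow> ('x \<Rightarrow> 'e)) set" where
  "Ap p = {T. bdd_op p T \<and>
              (\<forall>\<epsilon>>0. \<exists>B. band_op p B \<and> opnorm p (\<lambda>f x. T f x - B f x) < \<epsilon>)}"

definition Mterm :: "real \<Rightarrow> ('i \<Rightarrow> 'x \<Rightarrow> real) \<Rightarrow> (('x \<Rightarrow> 'e::real_normed_vector) \<Rightarrow> ('x \<Rightarrow> 'e))
     \<Rightarrow> 'i \<Rightarrow> ('x \<Rightarrow> 'e) \<Rightarrow> ('x \<Rightarrow> 'e)" where
  "Mterm r \<phi> A i f = (\<lambda>x. (\<phi> i x powr r) *\<^sub>R A (\<lambda>y. \<phi> i y *\<^sub>R f y) x)"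

text \<open>M(A) = sum_i phi_i^(p/q) A phi_i.  Pointwise only finitely many summands are
  nonzero; the strong (l^p-norm) convergence of the sum is part of the theorem.\<close>
definition Mop :: "real \<Rightarrow> 'i set \<Rightarrow> ('i \<Rightarrow> 'x \<Rightarrow> real) \<Rightarrow> (('x \<Rightarrow> 'e::real_normed_vector) \<Rightarrow> ('x \<Rightarrow> 'e))
     \<Rightarrow> (('x \<Rightarrow> 'e) \<Rightarrow> ('x \<Rightarrow> 'e))" where
  "Mop r I \<phi> A = (\<lambda>f x. \<Sum>i\<in>nz_support I \<phi> x. Mterm r \<phi> A i f x)"

end

theory Submission
  imports Defs
begin

definition Sp :: "real \<Rightarrow> ('x \<Rightarrow> 'e::real_normed_vector) \<Rightarrow> real" where
  "Sp p f = (\<Sum>\<^sub>\<infinity>x. norm (f x) powr p)"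

lemma lpnorm_Sp: "lpnorm p f = Sp p f powr (1/p)"
  by (simp add: lpnorm_def Sp_def)

lemma Sp_nonneg: "0 \<le> Sp p f"
  unfolding Sp_def by (rule infsum_nonneg) simp

lemma lpnorm_nonneg: "0 \<le> lpnorm p f"
  by (simp add: lpnorm_Sp)

lemma nonneg_fin_bound:
  fixes g :: "'a \<Rightarrow> real"
  assumes "\<And>x. x\<in>A \<Longrightarrow> 0 \<le> g x" "\<And>F. finite F \<Longrightarrow> F \<subseteq> A \<Longrightarrow> sum g F \<le> B"
  shows "g summable_on A" "infsum g A \<le> B"
proof -
  have "bdd_above (sum g ` {F. F\<subseteq>A \<and> finite F})"
    using assms(2) by (intro bdd_aboveI2[where M=B]) auto
  then show *: "g summable_on A" using assms(1) nonneg_bdd_above_summable_on by blast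
  show "infsum g A \<le> B" using * assms(2) by (rule infsum_le_finite_sums)
qed

lemma fin_le_infsum:
  fixes g :: "'a \<Rightarrow> real"
  assumes "g summable_on A" "\<And>x. x\<in>A \<Longrightarrow> 0 \<le> g x" "finite F" "F \<subseteq> A"
  shows "sum g F \<le> infsum g A"
  using assms by (intro finite_sum_le_infsum) auto

lemma lp_fin_le: "f \<in> lp p \<Longrightarrow> finite F \<Longrightarrow> (\<Sum>x\<in>F. norm (f x) powr p) \<le> Sp p f"
  unfolding lp_def Sp_def by (intro fin_le_infsum) auto

lemma lp_fin_bound:
  assumes "\<And>F. finite F \<Longrightarrow> (\<Sum>x\<in>F. norm (f x) powr p) \<le> B"
  shows "f \<in> lp p" "Sp p f \<le> B"
  using nonneg_fin_bound[of UNIV "\<lambda>x. norm (f x) powr p" B] assms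
  unfolding lp_def Sp_def by auto

lemma lp_dom:
  assumes "f \<in> lp p" "\<And>x. norm (g x) powr p \<le> c * norm (f x) powr p" "0 \<le> c"
  shows "g \<in> lp p" "Sp p g \<le> c * Sp p f"
proof -
  have "(\<Sum>x\<in>F. norm (g x) powr p) \<le> c * Sp p f" if "finite F" for F
  proof -
    have "(\<Sum>x\<in>F. norm (g x) powr p) \<le> (\<Sum>x\<in>F. c * norm (f x) powr p)"
      by (intro sum_mono assms(2))
    also have "\<dots> = c * (\<Sum>x\<in>F. norm (f x) powr p)" by (simp add: sum_distrib_left)
    also have "\<dots> \<le> c * Sp p f" using lp_fin_le[OF assms(1) that] assms(3)
      by (intro mult_left_mono) auto
    finally show ?thesis .
  qed
  then show "g \<in> lp p" "Sp p g \<le> c * Sp p f" using lp_fin_bound by blast+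
qed

lemma norm_add_powr:
  fixes u v :: "'e::real_normed_vector"
  assumes "0 < p"
  shows "norm (u + v) powr p \<le> 2 powr p * (norm u powr p + norm v powr p)"
proof -
  have "norm (u+v) \<le> 2 * max (norm u) (norm v)"
    using norm_triangle_ineq[of u v] by linarith
  then have "norm (u + v) powr p \<le> (2 * max (norm u) (norm v)) powr p"
    by (intro powr_mono2) (use assms in auto)
  also have "\<dots> = 2 powr p * max (norm u) (norm v) powr p"
    by (subst powr_mult) auto
  also have "max (norm u) (norm v) powr p \<le> norm u powr p + norm v powr p"
    by (cases "norm u \<le> norm v") (auto simp: max_def)
  then have "2 powr p * max (norm u) (norm v) powr p \<le> 2 powr p * (norm u powr p + norm v powr p)"
    by (intro mult_left_mono) auto
  finally show ?thesis .
qed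

lemma lp_add:
  assumes "f \<in> lp p" "g \<in> lp p" "0 < p"
  shows "(\<lambda>x. f x + g x) \<in> lp p" "Sp p (\<lambda>x. f x + g x) \<le> 2 powr p * (Sp p f + Sp p g)"
proof -
  have "(\<Sum>x\<in>F. norm (f x + g x) powr p) \<le> 2 powr p * (Sp p f + Sp p g)" if "finite F" for F
  proof -
    have "(\<Sum>x\<in>F. norm (f x + g x) powr p) \<le> (\<Sum>x\<in>F. 2 powr p * (norm (f x) powr p + norm (g x) powr p))"
      by (intro sum_mono norm_add_powr assms(3))
    also have "\<dots> = 2 powr p * ((\<Sum>x\<in>F. norm (f x) powr p) + (\<Sum>x\<in>F. norm (g x) powr p))"
      by (simp only: sum_distrib_left[symmetric] sum.distrib)
    also have "\<dots> \<le> 2 powr p * (Sp p f + Sp p g)"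
      using lp_fin_le[OF assms(1) that] lp_fin_le[OF assms(2) that]
      by (intro mult_left_mono) auto
    finally show ?thesis .
  qed
  then show "(\<lambda>x. f x + g x) \<in> lp p" "Sp p (\<lambda>x. f x + g x) \<le> 2 powr p * (Sp p f + Sp p g)"
    using lp_fin_bound[of "\<lambda>x. f x + g x" p] by auto
qed

lemma lp_scale:
  assumes "f \<in> lp p"
  shows "(\<lambda>x. c *\<^sub>R f x) \<in> lp p" "Sp p (\<lambda>x. c *\<^sub>R f x) = \<bar>c\<bar> powr p * Sp p f"
proof -
  have eq: "(\<lambda>x. norm (c *\<^sub>R f x) powr p) = (\<lambda>x. \<bar>c\<bar> powr p * norm (f x) powr p)"
    by (simp add: powr_mult)
  have "(\<lambda>x. \<bar>c\<bar> powr p * norm (f x) powr p) summable_on UNIV"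
    using assms unfolding lp_def by (auto intro: summable_on_cmult_right)
  then show "(\<lambda>x. c *\<^sub>R f x) \<in> lp p" unfolding lp_def mem_Collect_eq eq .
  show "Sp p (\<lambda>x. c *\<^sub>R f x) = \<bar>c\<bar> powr p * Sp p f"
    unfolding Sp_def eq by (rule infsum_cmult_right') 
qed

lemma lp_zero: "(\<lambda>x. 0) \<in> lp p" "Sp p (\<lambda>x. 0::'e::real_normed_vector) = 0"
  unfolding lp_def Sp_def by auto

lemma Sp_zero_imp:
  assumes "f \<in> lp p" "Sp p f = 0" "p \<noteq> 0"
  shows "f x = 0"
proof -
  have "norm (f x) powr p = 0"
    using assms unfolding lp_def Sp_def by (intro nonneg_infsum_le_0D[of _ UNIV]) auto
  then show ?thesis by simp
qed

lemma Sp_lpnorm: "p \<noteq> 0 \<Longrightarrow> Sp p f = lpnorm p f powr p"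
  using Sp_nonneg[of p f] by (simp add: lpnorm_Sp powr_powr)

lemma lpnorm_scale:
  assumes "f \<in> lp p" "p > 0"
  shows "lpnorm p (\<lambda>x. c *\<^sub>R f x) = \<bar>c\<bar> * lpnorm p f"
  using assms lp_scale(2)[OF assms(1), of c] Sp_nonneg[of p f]
  by (simp add: lpnorm_Sp powr_mult powr_powr)

lemma lpnorm_zero: "lpnorm p (\<lambda>x. 0::'e::real_normed_vector) = 0"
  by (simp add: lpnorm_Sp lp_zero)

lemma lpnorm_le_of_Sp:
  assumes "Sp p g \<le> K * Sp p f" "0 \<le> K" "p > 0"
  shows "lpnorm p g \<le> K powr (1/p) * lpnorm p f"
proof -
  have "lpnorm p g \<le> (K * Sp p f) powr (1/p)" unfolding lpnorm_Sp
    using assms Sp_nonneg[of p g] by (intro powr_mono2) auto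
  also have "\<dots> = K powr (1/p) * lpnorm p f" using assms Sp_nonneg[of p f]
    by (simp add: lpnorm_Sp powr_mult)
  finally show ?thesis .
qed

lemma lpnorm_add:
  assumes "f \<in> lp p" "g \<in> lp p" "1 \<le> p"
  shows "lpnorm p (\<lambda>x. f x + g x) \<le> 4 * (lpnorm p f + lpnorm p g)"
proof -
  define M where "M = max (lpnorm p f) (lpnorm p g)"
  have M0: "0 \<le> M" using lpnorm_nonneg[of p f] by (simp add: M_def)
  have "Sp p f \<le> M powr p" using assms Sp_lpnorm[of p f] lpnorm_nonneg[of p f]
    by (simp add: M_def powr_mono2)
  moreover have "Sp p g \<le> M powr p" using assms Sp_lpnorm[of p g] lpnorm_nonneg[of p g]
    by (simp add: M_def powr_mono2)
  ultimately have "Sp p (\<lambda>x. f x + g x) \<le> 2 powr p * (2 * M powr p)"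
    using lp_add(2)[OF assms(1,2)] assms(3)
    by (smt (verit, ccfv_SIG) mult_left_mono powr_ge_zero)
  also have "\<dots> \<le> 2 powr p * (2 powr p * M powr p)"
    using assms(3) by (intro mult_left_mono mult_right_mono) (auto intro: order.trans[OF _ powr_mono, of _ 2 1])
  also have "\<dots> = (4 * M) powr p" using M0 powr_mult[of 2 2 p] by (simp add: powr_mult)
  finally have "Sp p (\<lambda>x. f x + g x) \<le> (4 * M) powr p" .
  then have "lpnorm p (\<lambda>x. f x + g x) \<le> ((4*M) powr p) powr (1/p)"
    unfolding lpnorm_Sp using assms Sp_nonneg by (intro powr_mono2) auto
  also have "\<dots> = 4 * M" using M0 assms by (simp add: powr_powr)
  also have "\<dots> \<le> 4 * (lpnorm p f + lpnorm p g)"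
    using lpnorm_nonneg[of p f] lpnorm_nonneg[of p g] by (simp add: M_def)
  finally show ?thesis .
qed

definition bnd :: "real \<Rightarrow> (('x \<Rightarrow> 'e::real_normed_vector) \<Rightarrow> ('x \<Rightarrow> 'e)) \<Rightarrow> real \<Rightarrow> bool" where
  "bnd p T C \<longleftrightarrow> (\<forall>f\<in>lp p. T f \<in> lp p \<and> lpnorm p (T f) \<le> C * lpnorm p f)"

definition homog :: "real \<Rightarrow> (('x \<Rightarrow> 'e::real_normed_vector) \<Rightarrow> ('x \<Rightarrow> 'e)) \<Rightarrow> bool" where
  "homog p T \<longleftrightarrow> (\<forall>c. \<forall>f\<in>lp p. T (\<lambda>x. c *\<^sub>R f x) = (\<lambda>x. c *\<^sub>R T f x))"

lemma opnorm_set_bdd: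
  fixes T :: "('x \<Rightarrow> 'e::real_normed_vector) \<Rightarrow> ('x \<Rightarrow> 'e)"
  assumes "bnd p T C"
  shows "bdd_above {lpnorm p (T f) | f. f \<in> lp p \<and> lpnorm p f \<le> 1}"
proof (rule bdd_aboveI[where M="\<bar>C\<bar>"], clarify)
  fix f :: "'x \<Rightarrow> 'e" assume f: "f \<in> lp p" "lpnorm p f \<le> 1"
  have "lpnorm p (T f) \<le> C * lpnorm p f" using assms f unfolding bnd_def by auto
  also have "\<dots> \<le> \<bar>C\<bar>" using f lpnorm_nonneg[of p f]
    by (smt (verit) mult_left_le mult_nonneg_nonneg abs_ge_self abs_ge_zero mult_right_mono)
  finally show "lpnorm p (T f) \<le> \<bar>C\<bar>" .
qed

lemma opnorm_le:
  assumes "bnd p T C" "0 \<le> C"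
  shows "opnorm p T \<le> C"
  unfolding opnorm_def
proof (rule cSup_least)
  have "lpnorm p (T (\<lambda>x. 0)) \<in> {lpnorm p (T f) |f. f \<in> lp p \<and> lpnorm p f \<le> 1}"
    by (intro CollectI exI[of _ "\<lambda>x. 0"]) (simp add: lp_zero lpnorm_zero)
  then show "{lpnorm p (T f) |f. f \<in> lp p \<and> lpnorm p f \<le> 1} \<noteq> {}" by blast
  fix y assume "y \<in> {lpnorm p (T f) |f. f \<in> lp p \<and> lpnorm p f \<le> 1}"
  then obtain f where f: "f \<in> lp p" "lpnorm p f \<le> 1" "y = lpnorm p (T f)" by auto
  have "y \<le> C * lpnorm p f" using assms f unfolding bnd_def by auto
  also have "\<dots> \<le> C" using f assms by (simp add: mult_left_le)
  finally show "y \<le> C" .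
qed

lemma opnorm_ge:
  assumes "bnd p T C" "f \<in> lp p" "lpnorm p f \<le> 1"
  shows "lpnorm p (T f) \<le> opnorm p T"
  unfolding opnorm_def using assms opnorm_set_bdd[OF assms(1)] by (intro cSup_upper) auto

lemma opnorm_nonneg:
  assumes "bnd p T C"
  shows "0 \<le> opnorm p T"
  using opnorm_ge[OF assms lp_zero(1)] lpnorm_zero[of p] lpnorm_nonneg[of p "T (\<lambda>x. 0)"]
  by (metis order.trans order_refl zero_le_one)

lemma bnd_opnorm:
  fixes T :: "('x \<Rightarrow> 'e::real_normed_vector) \<Rightarrow> ('x \<Rightarrow> 'e)"
  assumes "bnd p T C" "homog p T" "p > 0"
  shows "bnd p T (opnorm p T)"
  unfolding bnd_def
proof (intro ballI conjI)
  fix f :: "'x \<Rightarrow> 'e" assume f: "f \<in> lp p"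
  show "T f \<in> lp p" using assms f unfolding bnd_def by auto
  show "lpnorm p (T f) \<le> opnorm p T * lpnorm p f"
  proof (cases "lpnorm p f = 0")
    case True
    then have "Sp p f = 0" using Sp_lpnorm[of p f] assms by simp
    then have "f x = 0" for x using Sp_zero_imp[OF f] assms by auto
    then have "f = (\<lambda>x. 0 *\<^sub>R f x)" by auto
    then have "T f = (\<lambda>x. 0 *\<^sub>R T f x)" using assms(2) f unfolding homog_def by metis
    then have "T f = (\<lambda>x. 0)" by simp
    then show ?thesis using True by (simp add: lpnorm_Sp Sp_def)
  next
    case False
    define L where "L = lpnorm p f"
    have L: "L > 0" using False lpnorm_nonneg[of p f] by (simp add: L_def)
    have f': "(\<lambda>x. (1/L) *\<^sub>R f x) \<in> lp p" using lp_scale(1)[OF f] .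
    have "lpnorm p (\<lambda>x. (1/L) *\<^sub>R f x) = 1" using lpnorm_scale[OF f assms(3)] L by (simp add: L_def)
    then have "lpnorm p (T (\<lambda>x. (1/L) *\<^sub>R f x)) \<le> opnorm p T"
      using opnorm_ge[OF assms(1) f'] by simp
    moreover have "T (\<lambda>x. (1/L) *\<^sub>R f x) = (\<lambda>x. (1/L) *\<^sub>R T f x)"
      using assms(2) f unfolding homog_def by blast
    moreover have "T f \<in> lp p" using assms f unfolding bnd_def by auto
    ultimately have "(1/L) * lpnorm p (T f) \<le> opnorm p T"
      using lpnorm_scale[of "T f" p "1/L"] assms L by simp
    then show ?thesis using L by (simp add: L_def field_simps)
  qed
qed

lemma powr_convex0:
  assumes "1 \<le> p"
  shows "convex_on {0..} (\<lambda>x::real. x powr p)"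
proof (rule convex_onI)
  show "convex {0::real..}" by (rule convex_real_interval)
  fix t x y :: real assume t: "0 < t" "t < 1" and xy: "x \<in> {0..}" "y \<in> {0..}"
  show "((1 - t) *\<^sub>R x + t *\<^sub>R y) powr p \<le> (1 - t) * x powr p + t * y powr p"
  proof (cases "x = 0 \<or> y = 0")
    case True
    have tp: "s powr p \<le> s" if "0 \<le> s" "s \<le> 1" for s :: real
      using powr_mono'[of 1 p s] that assms by simp
    show ?thesis
    proof (cases "x = 0")
      case True
      have "(t * y) powr p = t powr p * y powr p" using t xy by (simp add: powr_mult)
      also have "\<dots> \<le> t * y powr p" using tp[of t] t by (intro mult_right_mono) auto
      finally show ?thesis using True assms by simp
    next
      case False
      then have y0: "y = 0" using \<open>x = 0 \<or> y = 0\<close> by simp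
      have "((1-t) * x) powr p = (1-t) powr p * x powr p" using t xy by (simp add: powr_mult)
      also have "\<dots> \<le> (1-t) * x powr p" using tp[of "1-t"] t by (intro mult_right_mono) auto
      finally show ?thesis using y0 assms by simp
    qed
  next
    case False
    then have "x \<in> {0<..}" "y \<in> {0<..}" using xy by auto
    then show ?thesis using convex_onD[OF powr_convex[OF assms], of t x y] t by simp
  qed
qed

lemma jensen_pw:
  fixes a t :: "'i \<Rightarrow> real"
  assumes K: "finite K" and a: "\<And>i. i\<in>K \<Longrightarrow> 0 < a i" and W1: "(\<Sum>i\<in>K. a i powr p) \<le> 1"
    and t: "\<And>i. i\<in>K \<Longrightarrow> 0 \<le> t i" and p: "1 \<le> p"
  shows "(\<Sum>i\<in>K. a i powr (p-1) * t i) powr p \<le> (\<Sum>i\<in>K. t i powr p)"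
proof (cases "K = {}")
  case True then show ?thesis using p by simp
next
  case False
  define W where "W = (\<Sum>i\<in>K. a i powr p)"
  have Wpos: "0 < W" unfolding W_def using False K a by (intro sum_pos) (auto, fastforce)
  define w where "w i = a i powr p / W" for i
  define u where "u i = t i / a i" for i
  have sw: "(\<Sum>i\<in>K. w i) = 1" using Wpos by (simp add: w_def W_def flip: sum_divide_distrib)
  have key: "a i powr (p-1) * t i = W * (w i * u i)" if "i \<in> K" for i
  proof -
    have "a i powr p = a i powr (p-1) * a i" using a[OF that] by (simp add: powr_diff)
    then show ?thesis using a[OF that] Wpos by (simp add: w_def u_def field_simps)
  qed
  have "(\<Sum>i\<in>K. a i powr (p-1) * t i) = W * (\<Sum>i\<in>K. w i * u i)"
    by (simp add: key sum_distrib_left)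
  then have "(\<Sum>i\<in>K. a i powr (p-1) * t i) powr p = W powr p * (\<Sum>i\<in>K. w i * u i) powr p"
    using Wpos a t by (simp add: powr_mult w_def u_def sum_nonneg)
  also have "(\<Sum>i\<in>K. w i * u i) powr p \<le> (\<Sum>i\<in>K. w i * u i powr p)"
  proof -
    have wnn: "\<And>i. i\<in>K \<Longrightarrow> 0 \<le> w i" using a Wpos by (simp add: w_def)
    have unn: "\<And>i. i\<in>K \<Longrightarrow> u i \<in> {0..}" using a t by (simp add: u_def less_imp_le)
    show ?thesis using convex_on_sum[OF K False powr_convex0[OF p] sw wnn unn] by simp
  qed
  then have "W powr p * (\<Sum>i\<in>K. w i * u i) powr p \<le> W powr p * (\<Sum>i\<in>K. w i * u i powr p)"
    by (intro mult_left_mono) auto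
  also have "W powr p * (\<Sum>i\<in>K. w i * u i powr p) = W powr (p-1) * (\<Sum>i\<in>K. a i powr p * u i powr p)"
    using Wpos by (simp add: w_def sum_distrib_left powr_diff field_simps flip: sum_divide_distrib)
  also have "\<dots> \<le> 1 * (\<Sum>i\<in>K. a i powr p * u i powr p)"
    using W1 Wpos p by (intro mult_right_mono powr_le1 sum_nonneg) (auto simp: W_def)
  also have "(\<Sum>i\<in>K. a i powr p * u i powr p) = (\<Sum>i\<in>K. t i powr p)"
  proof (intro sum.cong refl)
    fix i assume i: "i \<in> K"
    then show "a i powr p * u i powr p = t i powr p"
      using a[OF i] t[OF i] by (simp add: u_def flip: powr_mult)
  qed
  finally show ?thesis by simp
qed

lemma sum_powr_le:
  fixes t :: "'a \<Rightarrow> real"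
  assumes "finite S" "card S \<le> K" "\<And>y. y\<in>S \<Longrightarrow> 0 \<le> t y" "0 < p"
  shows "(\<Sum>y\<in>S. t y) powr p \<le> real K powr p * (\<Sum>y\<in>S. t y powr p)"
proof (cases "S = {}")
  case True then show ?thesis by simp
next
  case False
  define m where "m = Max (t ` S)"
  have "m \<in> t ` S" unfolding m_def using assms(1) False by (intro Max_in) auto
  then obtain y0 where y0: "y0 \<in> S" "m = t y0" by auto
  have m0: "0 \<le> m" using assms(3) y0 by simp
  have "(\<Sum>y\<in>S. t y) \<le> (\<Sum>y\<in>S. m)" using assms(1) by (intro sum_mono) (auto simp: m_def)
  also have "\<dots> = card S * m" by simp
  also have "\<dots> \<le> K * m" using assms(2) m0 by (intro mult_right_mono) auto
  finally have "(\<Sum>y\<in>S. t y) powr p \<le> (K * m) powr p"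
    using assms by (intro powr_mono2 sum_nonneg) auto
  also have "\<dots> = K powr p * m powr p" using m0 by (simp add: powr_mult)
  also have "m powr p \<le> (\<Sum>y\<in>S. t y powr p)"
    unfolding y0(2) using assms(1) y0(1) by (intro member_le_sum) auto
  then have "K powr p * m powr p \<le> K powr p * (\<Sum>y\<in>S. t y powr p)" by (intro mult_left_mono) auto
  finally show ?thesis .
qed

lemma bg_cball:
  assumes "bounded_geometry TYPE('x::metric_space)"
  shows "\<exists>K::nat. \<forall>x::'x. finite (cball x R) \<and> card (cball x R) \<le> K"
proof -
  obtain N :: nat where N: "\<And>x::'x. finite (ball x (\<bar>R\<bar>+1)) \<and> card (ball x (\<bar>R\<bar>+1)) \<le> N"
    using assms unfolding bounded_geometry_def by (metis abs_ge_zero add_pos_nonneg less_numeral_extra(1) add.commute)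
  have sub: "cball x R \<subseteq> ball x (\<bar>R\<bar>+1)" for x :: 'x by auto
  show ?thesis
    by (rule exI[of _ N]) (meson N sub card_mono finite_subset order.trans)
qed

lemma schur:
  fixes d :: "'x::metric_space \<Rightarrow> 'x \<Rightarrow> ('e::real_normed_vector \<Rightarrow>\<^sub>L 'e)"
  assumes fin: "\<And>x::'x. finite (cball x R) \<and> card (cball x R) \<le> K"
    and S: "\<And>x. S x \<subseteq> cball x R"
    and d: "\<And>x y. y \<in> S x \<Longrightarrow> norm (d x y) \<le> \<delta>" and \<delta>: "0 \<le> \<delta>"
    and f: "f \<in> lp p" and p: "0 < p"
  shows "(\<lambda>x. \<Sum>y\<in>S x. blinfun_apply (d x y) (f y)) \<in> lp p"
        "Sp p (\<lambda>x. \<Sum>y\<in>S x. blinfun_apply (d x y) (f y)) \<le> (\<delta> powr p * real K powr p * real K) * Sp p f"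
proof -
  define g where "g y = norm (f y) powr p" for y
  have finS: "finite (S x)" for x using fin[of x] S[of x] finite_subset by blast
  have cardS: "card (S x) \<le> K" for x using fin[of x] S[of x] card_mono by (metis order.trans)
  have pw: "norm (\<Sum>y\<in>S x. blinfun_apply (d x y) (f y)) powr p \<le> \<delta> powr p * real K powr p * (\<Sum>y\<in>S x. g y)" for x
  proof -
    have "norm (\<Sum>y\<in>S x. blinfun_apply (d x y) (f y)) \<le> (\<Sum>y\<in>S x. norm (blinfun_apply (d x y) (f y)))"
      by (rule norm_sum)
    also have "\<dots> \<le> (\<Sum>y\<in>S x. \<delta> * norm (f y))"
    proof (intro sum_mono)
      fix y assume y: "y \<in> S x"
      show "norm (blinfun_apply (d x y) (f y)) \<le> \<delta> * norm (f y)"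
        using d[OF y] norm_blinfun[of "d x y" "f y"] by (meson mult_right_mono norm_ge_zero order.trans)
    qed
    also have "\<dots> = \<delta> * (\<Sum>y\<in>S x. norm (f y))" by (simp add: sum_distrib_left)
    finally have "norm (\<Sum>y\<in>S x. blinfun_apply (d x y) (f y)) powr p \<le> (\<delta> * (\<Sum>y\<in>S x. norm (f y))) powr p"
      using p by (intro powr_mono2) auto
    also have "\<dots> = \<delta> powr p * (\<Sum>y\<in>S x. norm (f y)) powr p" using \<delta> by (simp add: powr_mult sum_nonneg)
    also have "\<dots> \<le> \<delta> powr p * (real K powr p * (\<Sum>y\<in>S x. norm (f y) powr p))"
      by (intro mult_left_mono sum_powr_le finS cardS p) auto
    finally show ?thesis by (simp add: g_def mult.assoc)
  qed
  have "(\<Sum>x\<in>F. norm (\<Sum>y\<in>S x. blinfun_apply (d x y) (f y)) powr p) \<le> (\<delta> powr p * real K powr p * real K) * Sp p f"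
    if F: "finite F" for F
  proof -
    define G where "G = (\<Union>x\<in>F. S x)"
    have G: "finite G" using F finS by (simp add: G_def)
    have "(\<Sum>x\<in>F. \<Sum>y\<in>S x. g y) = (\<Sum>x\<in>F. \<Sum>y\<in>G. if y \<in> S x then g y else 0)"
    proof (rule sum.cong[OF refl])
      fix x assume "x \<in> F"
      then have "S x \<subseteq> G" by (auto simp: G_def)
      then show "(\<Sum>y\<in>S x. g y) = (\<Sum>y\<in>G. if y \<in> S x then g y else 0)"
        using G by (simp add: sum.If_cases Int_absorb1 Int_commute)
    qed
    also have "\<dots> = (\<Sum>y\<in>G. \<Sum>x\<in>F. if y \<in> S x then g y else 0)" by (rule sum.swap)
    also have "\<dots> \<le> (\<Sum>y\<in>G. real K * g y)"
    proof (intro sum_mono)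
      fix y assume "y \<in> G"
      have "(\<Sum>x\<in>F. if y \<in> S x then g y else 0) = (\<Sum>x\<in>{x\<in>F. y \<in> S x}. g y)"
        using F sum.inter_filter[of F "\<lambda>x. g y" "\<lambda>x. y \<in> S x"] by simp
      also have "\<dots> = card {x\<in>F. y \<in> S x} * g y" by simp
      also have "card {x\<in>F. y \<in> S x} \<le> K"
      proof -
        have "{x\<in>F. y \<in> S x} \<subseteq> cball y R" using S by (auto simp: dist_commute subset_iff)
        then show ?thesis using fin[of y] card_mono by (metis order.trans)
      qed
      then have "card {x\<in>F. y \<in> S x} * g y \<le> real K * g y"
        by (intro mult_right_mono) (auto simp: g_def)
      finally show "(\<Sum>x\<in>F. if y \<in> S x then g y else 0) \<le> real K * g y" .
    qed
    also have "\<dots> = real K * (\<Sum>y\<in>G. g y)" by (simp add: sum_distrib_left)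
    also have "\<dots> \<le> real K * Sp p f" using lp_fin_le[OF f G] by (intro mult_left_mono) (auto simp: g_def)
    finally have "(\<Sum>x\<in>F. \<Sum>y\<in>S x. g y) \<le> real K * Sp p f" .
    then have inner: "\<delta> powr p * real K powr p * (\<Sum>x\<in>F. \<Sum>y\<in>S x. g y) \<le> \<delta> powr p * real K powr p * (real K * Sp p f)"
      by (intro mult_left_mono) auto
    have "(\<Sum>x\<in>F. norm (\<Sum>y\<in>S x. blinfun_apply (d x y) (f y)) powr p) \<le> (\<Sum>x\<in>F. \<delta> powr p * real K powr p * (\<Sum>y\<in>S x. g y))"
      by (intro sum_mono pw)
    also have "\<dots> = \<delta> powr p * real K powr p * (\<Sum>x\<in>F. \<Sum>y\<in>S x. g y)" by (simp add: sum_distrib_left)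
    also note inner
    finally show ?thesis by (simp add: mult.assoc)
  qed
  then show "(\<lambda>x. \<Sum>y\<in>S x. blinfun_apply (d x y) (f y)) \<in> lp p"
        "Sp p (\<lambda>x. \<Sum>y\<in>S x. blinfun_apply (d x y) (f y)) \<le> (\<delta> powr p * real K powr p * real K) * Sp p f"
    using lp_fin_bound[of "\<lambda>x. \<Sum>y\<in>S x. blinfun_apply (d x y) (f y)" p] by auto
qed

lemma infsum_sum_fin:
  fixes h :: "'i \<Rightarrow> 'a \<Rightarrow> real"
  assumes "finite G" "\<And>i. i \<in> G \<Longrightarrow> h i summable_on A"
  shows "(\<lambda>x. \<Sum>i\<in>G. h i x) summable_on A \<and> infsum (\<lambda>x. \<Sum>i\<in>G. h i x) A = (\<Sum>i\<in>G. infsum (h i) A)"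
  using assms
proof (induction G rule: finite_induct)
  case empty then show ?case by simp
next
  case (insert j G)
  then have IH: "(\<lambda>x. \<Sum>i\<in>G. h i x) summable_on A" "infsum (\<lambda>x. \<Sum>i\<in>G. h i x) A = (\<Sum>i\<in>G. infsum (h i) A)"
    by auto
  have hj: "h j summable_on A" using insert by auto
  show ?case using insert(1,2) IH hj
    by (simp add: summable_on_add infsum_add)
qed

context
  fixes p :: real and I :: "'i set" and \<phi> :: "'i \<Rightarrow> 'x::metric_space \<Rightarrow> real"
    and A :: "('x \<Rightarrow> 'e::real_normed_vector) \<Rightarrow> ('x \<Rightarrow> 'e)" and K :: real and f :: "'x \<Rightarrow> 'e"
  assumes p: "1 \<le> p"
    and rng: "\<And>i x. i \<in> I \<Longrightarrow> 0 \<le> \<phi> i x \<and> \<phi> i x \<le> 1"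
    and nzfin: "\<And>x. finite (nz_support I \<phi> x)"
    and sum1: "\<And>x. (\<Sum>i\<in>nz_support I \<phi> x. \<phi> i x powr p) = 1"
    and Ab: "\<And>g. g \<in> lp p \<Longrightarrow> A g \<in> lp p \<and> Sp p (A g) \<le> K * Sp p g"
    and K: "0 \<le> K"
    and f: "f \<in> lp p"
begin

lemma sum_le1:
  assumes "finite G" "G \<subseteq> I"
  shows "(\<Sum>i\<in>G. \<phi> i y powr p) \<le> 1"
proof -
  have "(\<Sum>i\<in>G. \<phi> i y powr p) = (\<Sum>i\<in>G \<inter> nz_support I \<phi> y. \<phi> i y powr p)"
    using assms by (intro sum.mono_neutral_right) (auto simp: nz_support_def)
  also have "\<dots> \<le> (\<Sum>i\<in>nz_support I \<phi> y. \<phi> i y powr p)"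
    using nzfin[of y] by (intro sum_mono2) auto
  finally show ?thesis using sum1[of y] by simp
qed

definition gi where "gi i = (\<lambda>y. \<phi> i y *\<^sub>R f y)"
definition ei where "ei i = Sp p (A (gi i))"

lemma gi_lp: "i \<in> I \<Longrightarrow> gi i \<in> lp p"
  unfolding gi_def using rng[of i] p
  by (intro lp_dom(1)[OF f, of _ 1]) (auto simp: powr_mult intro!: mult_left_le_one_le powr_le1)

lemma gi_sum:
  assumes "finite G" "G \<subseteq> I"
  shows "(\<Sum>i\<in>G. Sp p (gi i)) \<le> Sp p f"
proof -
  have eq: "(\<lambda>y. norm (gi i y) powr p) = (\<lambda>y. \<phi> i y powr p * norm (f y) powr p)" if "i \<in> I" for i
    using rng[OF that] by (auto simp: gi_def powr_mult)
  have sm: "(\<lambda>y. \<phi> i y powr p * norm (f y) powr p) summable_on UNIV" if "i \<in> G" for i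
    using gi_lp[of i] that assms eq[of i] unfolding lp_def by auto
  have "(\<Sum>i\<in>G. Sp p (gi i)) = (\<Sum>i\<in>G. infsum (\<lambda>y. \<phi> i y powr p * norm (f y) powr p) UNIV)"
    using assms by (intro sum.cong refl) (auto simp: Sp_def eq)
  also have "\<dots> = infsum (\<lambda>y. \<Sum>i\<in>G. \<phi> i y powr p * norm (f y) powr p) UNIV"
    using infsum_sum_fin[OF assms(1) sm] by simp
  also have "\<dots> \<le> infsum (\<lambda>y. norm (f y) powr p) UNIV"
  proof (rule infsum_mono)
    show "(\<lambda>y. \<Sum>i\<in>G. \<phi> i y powr p * norm (f y) powr p) summable_on UNIV"
      using infsum_sum_fin[OF assms(1) sm] by simp
    show "(\<lambda>y. norm (f y) powr p) summable_on UNIV" using f by (simp add: lp_def)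
    fix y
    have "(\<Sum>i\<in>G. \<phi> i y powr p * norm (f y) powr p) = (\<Sum>i\<in>G. \<phi> i y powr p) * norm (f y) powr p"
      by (simp add: sum_distrib_right)
    also have "\<dots> \<le> 1 * norm (f y) powr p" using sum_le1[OF assms] by (intro mult_right_mono) auto
    finally show "(\<Sum>i\<in>G. \<phi> i y powr p * norm (f y) powr p) \<le> norm (f y) powr p" by simp
  qed
  finally show ?thesis by (simp add: Sp_def)
qed

lemma ei_nonneg: "0 \<le> ei i"
  by (simp add: ei_def Sp_nonneg)

lemma ei_fin: "finite G \<Longrightarrow> G \<subseteq> I \<Longrightarrow> sum ei G \<le> K * Sp p f"
proof -
  assume G: "finite G" "G \<subseteq> I"
  have "sum ei G \<le> (\<Sum>i\<in>G. K * Sp p (gi i))"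
    using G Ab gi_lp by (intro sum_mono) (auto simp: ei_def)
  also have "\<dots> = K * (\<Sum>i\<in>G. Sp p (gi i))" by (simp add: sum_distrib_left)
  also have "\<dots> \<le> K * Sp p f" using gi_sum[OF G] K by (intro mult_left_mono)
  finally show ?thesis .
qed

lemma ei_summable: "ei summable_on J" "infsum ei J \<le> K * Sp p f" if "J \<subseteq> I"
  using nonneg_fin_bound[of J ei "K * Sp p f"] ei_nonneg ei_fin that by auto

definition hF where "hF F = (\<lambda>x. \<Sum>i\<in>nz_support I \<phi> x - F. (\<phi> i x powr (p-1)) *\<^sub>R A (gi i) x)"

lemma hF_bound:
  assumes FI: "F \<subseteq> I"
  shows "hF F \<in> lp p" "Sp p (hF F) \<le> infsum ei (I - F)"
proof -
  define H where "H i x = norm (A (gi i) x) powr p" for i x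
  have pw: "norm (hF F x) powr p \<le> (\<Sum>i\<in>nz_support I \<phi> x - F. H i x)" for x
  proof -
    let ?N = "nz_support I \<phi> x - F"
    have pos: "0 < \<phi> i x" if "i \<in> ?N" for i
      using that rng[of i x] by (auto simp: nz_support_def)
    have "norm (hF F x) \<le> (\<Sum>i\<in>?N. norm ((\<phi> i x powr (p-1)) *\<^sub>R A (gi i) x))"
      unfolding hF_def by (rule norm_sum)
    also have "\<dots> = (\<Sum>i\<in>?N. \<phi> i x powr (p-1) * norm (A (gi i) x))" by simp
    finally have "norm (hF F x) powr p \<le> (\<Sum>i\<in>?N. \<phi> i x powr (p-1) * norm (A (gi i) x)) powr p"
      using p by (intro powr_mono2) auto
    also have "\<dots> \<le> (\<Sum>i\<in>?N. norm (A (gi i) x) powr p)"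
    proof (rule jensen_pw)
      show "finite ?N" using nzfin[of x] by auto
      show "(\<Sum>i\<in>?N. \<phi> i x powr p) \<le> 1"
        using sum_le1[of ?N x] nzfin[of x] by (auto simp: nz_support_def)
    qed (use pos p in auto)
    finally show ?thesis by (simp add: H_def)
  qed
  have "(\<Sum>x\<in>X. norm (hF F x) powr p) \<le> infsum ei (I - F)" if X: "finite X" for X
  proof -
    define G where "G = (\<Union>x\<in>X. nz_support I \<phi> x - F)"
    have G: "finite G" "G \<subseteq> I - F" using X nzfin by (auto simp: G_def nz_support_def)
    have "(\<Sum>x\<in>X. norm (hF F x) powr p) \<le> (\<Sum>x\<in>X. \<Sum>i\<in>nz_support I \<phi> x - F. H i x)"
      by (intro sum_mono pw)
    also have "\<dots> = (\<Sum>x\<in>X. \<Sum>i\<in>G. if i \<in> nz_support I \<phi> x - F then H i x else 0)"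
    proof (rule sum.cong[OF refl])
      fix x assume "x \<in> X"
      then have "G \<inter> (nz_support I \<phi> x - F) = nz_support I \<phi> x - F" by (auto simp: G_def)
      then show "(\<Sum>i\<in>nz_support I \<phi> x - F. H i x) = (\<Sum>i\<in>G. if i \<in> nz_support I \<phi> x - F then H i x else 0)"
        using sum.inter_restrict[OF G(1), of "\<lambda>i. H i x" "nz_support I \<phi> x - F"] by simp
    qed
    also have "\<dots> = (\<Sum>i\<in>G. \<Sum>x\<in>X. if i \<in> nz_support I \<phi> x - F then H i x else 0)" by (rule sum.swap)
    also have "\<dots> \<le> (\<Sum>i\<in>G. ei i)"
    proof (rule sum_mono)
      fix i assume i: "i \<in> G"
      have "(\<Sum>x\<in>X. if i \<in> nz_support I \<phi> x - F then H i x else 0) \<le> (\<Sum>x\<in>X. H i x)"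
        by (intro sum_mono) (auto simp: H_def)
      also have "\<dots> \<le> ei i" unfolding ei_def H_def
      proof (rule lp_fin_le[OF _ X])
        have "i \<in> I" using i G by auto
        then show "A (gi i) \<in> lp p" using Ab gi_lp by blast
      qed
      finally show "(\<Sum>x\<in>X. if i \<in> nz_support I \<phi> x - F then H i x else 0) \<le> ei i" .
    qed
    also have "\<dots> \<le> infsum ei (I - F)"
      using G ei_summable[of "I - F"] ei_nonneg by (intro fin_le_infsum) auto
    finally show ?thesis .
  qed
  then show "hF F \<in> lp p" "Sp p (hF F) \<le> infsum ei (I - F)"
    using lp_fin_bound[of "hF F" p] by auto
qed

lemma Mop_eq_hF:
  "Mop (p-1) I \<phi> A f = hF {}"
  by (simp add: Mop_def hF_def Mterm_def gi_def)

lemma Mop_bound: "Mop (p-1) I \<phi> A f \<in> lp p" "Sp p (Mop (p-1) I \<phi> A f) \<le> K * Sp p f"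
  using hF_bound[of "{}"] ei_summable[of I] by (auto simp: Mop_eq_hF)

lemma Mop_diff_eq:
  assumes "finite F" "F \<subseteq> I"
  shows "(\<lambda>x. Mop (p-1) I \<phi> A f x - (\<Sum>i\<in>F. Mterm (p-1) \<phi> A i f x)) = hF F"
proof
  fix x
  let ?N = "nz_support I \<phi> x"
  have "(\<Sum>i\<in>F. Mterm (p-1) \<phi> A i f x) = (\<Sum>i\<in>F \<inter> ?N. Mterm (p-1) \<phi> A i f x)"
    using assms by (intro sum.mono_neutral_right) (auto simp: nz_support_def Mterm_def)
  moreover have "Mop (p-1) I \<phi> A f x = (\<Sum>i\<in>?N - F. Mterm (p-1) \<phi> A i f x) + (\<Sum>i\<in>F \<inter> ?N. Mterm (p-1) \<phi> A i f x)"
  proof -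
    have e: "?N - F \<inter> ?N = ?N - F" by blast
    show ?thesis unfolding Mop_def using nzfin[of x] sum.subset_diff[of "F \<inter> ?N" ?N "\<lambda>i. Mterm (p-1) \<phi> A i f x"]
      by (simp add: e)
  qed
  ultimately show "Mop (p-1) I \<phi> A f x - (\<Sum>i\<in>F. Mterm (p-1) \<phi> A i f x) = hF F x"
    by (simp add: hF_def Mterm_def gi_def)
qed

lemma Mop_strong:
  "((\<lambda>F. lpnorm p (\<lambda>x. Mop (p-1) I \<phi> A f x - (\<Sum>i\<in>F. Mterm (p-1) \<phi> A i f x))) \<longlongrightarrow> 0)
     (finite_subsets_at_top I)"
proof (rule tendsto_sandwich[where f="\<lambda>_. 0"])
  have sI: "ei summable_on I" using ei_summable[of I] by simp
  show "((\<lambda>_. 0::real) \<longlongrightarrow> 0) (finite_subsets_at_top I)" by simp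
  have "(sum ei \<longlongrightarrow> infsum ei I) (finite_subsets_at_top I)"
    using sI by (simp add: summable_iff_has_sum_infsum has_sum_def)
  then have "((\<lambda>F. infsum ei I - sum ei F) \<longlongrightarrow> infsum ei I - infsum ei I) (finite_subsets_at_top I)"
    by (intro tendsto_intros)
  then have t0: "((\<lambda>F. infsum ei I - sum ei F) \<longlongrightarrow> 0) (finite_subsets_at_top I)" by simp
  have ev: "\<forall>\<^sub>F F in finite_subsets_at_top I. 0 \<le> infsum ei I - sum ei F"
    using sI ei_nonneg by (intro eventually_finite_subsets_at_top_weakI) (auto intro: fin_le_infsum)
  show "((\<lambda>F. (infsum ei I - sum ei F) powr (1/p)) \<longlongrightarrow> 0) (finite_subsets_at_top I)"
    using p by (intro tendsto_zero_powrI[OF t0 _ ev]) auto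
  show "\<forall>\<^sub>F F in finite_subsets_at_top I. 0 \<le> lpnorm p (\<lambda>x. Mop (p-1) I \<phi> A f x - (\<Sum>i\<in>F. Mterm (p-1) \<phi> A i f x))"
    by (simp add: lpnorm_nonneg)
  show "\<forall>\<^sub>F F in finite_subsets_at_top I. lpnorm p (\<lambda>x. Mop (p-1) I \<phi> A f x - (\<Sum>i\<in>F. Mterm (p-1) \<phi> A i f x))
           \<le> (infsum ei I - sum ei F) powr (1/p)"
  proof (intro eventually_finite_subsets_at_top_weakI)
    fix F assume F: "finite F" "F \<subseteq> I"
    have "infsum ei (I - F) = infsum ei I - sum ei F"
      using F sI by (subst infsum_Diff) auto
    then show "lpnorm p (\<lambda>x. Mop (p-1) I \<phi> A f x - (\<Sum>i\<in>F. Mterm (p-1) \<phi> A i f x)) \<le> (infsum ei I - sum ei F) powr (1/p)"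
      unfolding Mop_diff_eq[OF F] lpnorm_Sp using hF_bound[OF F(2)] Sp_nonneg p
      by (intro powr_mono2) auto
  qed
qed

end

lemma bdd_from_lin:
  fixes v :: "'e::real_normed_vector"
  shows "blinfun_apply b (c *\<^sub>R v) = c *\<^sub>R blinfun_apply b v"
    "blinfun_apply (c *\<^sub>R b) v = c *\<^sub>R blinfun_apply b v"
    "blinfun_apply b (u + v) = blinfun_apply b u + blinfun_apply b v"
  by (simp_all add: blinfun.scaleR_right blinfun.scaleR_left blinfun.add_right)

lemma blinfun_sum_right: "blinfun_apply b (\<Sum>i\<in>G. v i) = (\<Sum>i\<in>G. blinfun_apply b (v i))"
  by (induction G rule: infinite_finite_induct) (simp_all add: blinfun.add_right)

lemma powr_m1: "0 < a \<Longrightarrow> a powr (p-1) * a = a powr (p::real)"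
  by (simp add: powr_diff)

context
  fixes p :: real and b :: "'x::metric_space \<Rightarrow> 'x \<Rightarrow> ('e::real_normed_vector \<Rightarrow>\<^sub>L 'e)"
    and C R :: real and B :: "('x \<Rightarrow> 'e) \<Rightarrow> ('x \<Rightarrow> 'e)" and KR :: nat
  assumes bC: "\<And>x y. norm (b x y) \<le> C"
    and bR: "\<And>x y. b x y \<noteq> 0 \<Longrightarrow> dist x y \<le> R"
    and Bdef: "\<And>f. f \<in> lp p \<Longrightarrow> B f = (\<lambda>x. \<Sum>y\<in>{y. b x y \<noteq> 0}. blinfun_apply (b x y) (f y))"
    and finK: "\<And>x::'x. finite (cball x R) \<and> card (cball x R) \<le> KR"
    and p1: "1 \<le> p"
begin

lemma C0: "0 \<le> C" using bC[of undefined undefined] norm_ge_zero order.trans by blast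

lemma Sb_sub: "{y. b x y \<noteq> 0} \<subseteq> cball x R"
  using bR by (auto simp: mem_cball)

lemma Sb_fin: "finite {y. b x y \<noteq> 0}"
  using finK[of x] Sb_sub finite_subset by blast

lemma band_bnd: "bnd p B ((C powr p * real KR powr p * real KR) powr (1/p))"
  unfolding bnd_def
proof (intro ballI conjI)
  fix f :: "'x \<Rightarrow> 'e" assume f: "f \<in> lp p"
  note sch = schur[where R=R and K=KR and S="\<lambda>x. {y. b x y \<noteq> 0}" and d=b and \<delta>=C and f=f and p=p, OF finK Sb_sub bC C0 f]
  show "B f \<in> lp p" using sch p1 Bdef[OF f] by auto
  show "lpnorm p (B f) \<le> (C powr p * real KR powr p * real KR) powr (1/p) * lpnorm p f"
    using sch p1 Bdef[OF f] by (intro lpnorm_le_of_Sp) auto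
qed

lemma band_add: "f \<in> lp p \<Longrightarrow> g \<in> lp p \<Longrightarrow> (\<lambda>x. f x + g x) \<in> lp p \<Longrightarrow> B (\<lambda>x. f x + g x) = (\<lambda>x. B f x + B g x)"
  by (simp add: Bdef blinfun.add_right sum.distrib)

lemma band_homog: "homog p B"
  unfolding homog_def
proof (intro allI ballI)
  fix c and f :: "'x \<Rightarrow> 'e" assume f: "f \<in> lp p"
  then have "(\<lambda>x. c *\<^sub>R f x) \<in> lp p" by (rule lp_scale)
  then show "B (\<lambda>x. c *\<^sub>R f x) = (\<lambda>x. c *\<^sub>R B f x)"
    using f by (simp add: Bdef blinfun.scaleR_right scaleR_sum_right)
qed

context
  fixes I :: "'i set" and \<phi> :: "'i \<Rightarrow> 'x \<Rightarrow> real"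
  assumes rng: "\<And>i x. i \<in> I \<Longrightarrow> 0 \<le> \<phi> i x \<and> \<phi> i x \<le> 1"
    and nzfin: "\<And>x. finite (nz_support I \<phi> x)"
    and sum1: "\<And>x. (\<Sum>i\<in>nz_support I \<phi> x. \<phi> i x powr p) = 1"
begin

definition cc where "cc x y = (\<Sum>i\<in>nz_support I \<phi> x. \<phi> i x powr (p-1) * \<phi> i y)"

lemma Mop_band_expand:
  fixes f :: "'x \<Rightarrow> 'e"
  assumes f: "f \<in> lp p"
  shows "Mop (p-1) I \<phi> B f x = (\<Sum>y\<in>{y. b x y \<noteq> 0}. cc x y *\<^sub>R blinfun_apply (b x y) (f y))"
proof -
  have gl: "(\<lambda>y. \<phi> i y *\<^sub>R f y) \<in> lp p" if "i \<in> I" for i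
    using rng[of i] p1 that
    by (intro lp_dom(1)[OF f, of _ 1]) (auto simp: powr_mult intro!: mult_left_le_one_le powr_le1)
  have "Mop (p-1) I \<phi> B f x = (\<Sum>i\<in>nz_support I \<phi> x. \<phi> i x powr (p-1) *\<^sub>R
          (\<Sum>y\<in>{y. b x y \<noteq> 0}. \<phi> i y *\<^sub>R blinfun_apply (b x y) (f y)))"
    unfolding Mop_def Mterm_def
    by (intro sum.cong refl) (simp add: Bdef[OF gl] nz_support_def blinfun.scaleR_right)
  also have "\<dots> = (\<Sum>i\<in>nz_support I \<phi> x. \<Sum>y\<in>{y. b x y \<noteq> 0}. (\<phi> i x powr (p-1) * \<phi> i y) *\<^sub>R blinfun_apply (b x y) (f y))"
    by (simp add: scaleR_sum_right)
  also have "\<dots> = (\<Sum>y\<in>{y. b x y \<noteq> 0}. \<Sum>i\<in>nz_support I \<phi> x. (\<phi> i x powr (p-1) * \<phi> i y) *\<^sub>R blinfun_apply (b x y) (f y))"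
    by (rule sum.swap)
  also have "\<dots> = (\<Sum>y\<in>{y. b x y \<noteq> 0}. cc x y *\<^sub>R blinfun_apply (b x y) (f y))"
    by (simp add: cc_def scaleR_sum_left)
  finally show ?thesis .
qed

lemma cc_bound: "0 \<le> cc x y \<and> cc x y \<le> real (card (nz_support I \<phi> x))"
proof -
  have t: "0 \<le> \<phi> i x powr (p-1) * \<phi> i y \<and> \<phi> i x powr (p-1) * \<phi> i y \<le> 1" if "i \<in> nz_support I \<phi> x" for i
    using that rng[of i x] rng[of i y] p1 by (auto simp: nz_support_def intro!: mult_le_one powr_le1)
  have "cc x y \<le> (\<Sum>i\<in>nz_support I \<phi> x. 1)" unfolding cc_def using t by (intro sum_mono) auto
  then show ?thesis using t unfolding cc_def by (auto intro: sum_nonneg)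
qed

lemma Mop_band:
  assumes N: "\<And>x. card (nz_support I \<phi> x) \<le> N"
  shows "band_op p (Mop (p-1) I \<phi> B)"
  unfolding band_op_def
proof (intro exI[of _ "\<lambda>x y. cc x y *\<^sub>R b x y"] conjI)
  show "\<exists>C'. \<forall>x y. norm (cc x y *\<^sub>R b x y) \<le> C'"
  proof (intro exI allI)
    fix x y
    have "norm (cc x y *\<^sub>R b x y) = cc x y * norm (b x y)" using cc_bound[of x y] by simp
    also have "\<dots> \<le> real N * C" using cc_bound[of x y] N[of x] bC[of x y] C0
      by (intro mult_mono) auto
    finally show "norm (cc x y *\<^sub>R b x y) \<le> real N * C" .
  qed
  show "\<exists>R'. \<forall>x y. cc x y *\<^sub>R b x y \<noteq> 0 \<longrightarrow> dist x y \<le> R'"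
    using bR by (intro exI[of _ R]) auto
  show "\<forall>f\<in>lp p. Mop (p-1) I \<phi> B f = (\<lambda>x. \<Sum>y\<in>{y. cc x y *\<^sub>R b x y \<noteq> 0}. blinfun_apply (cc x y *\<^sub>R b x y) (f y))"
  proof (intro ballI ext)
    fix f :: "'x \<Rightarrow> 'e" and x assume f: "f \<in> lp p"
    have "(\<Sum>y\<in>{y. cc x y *\<^sub>R b x y \<noteq> 0}. blinfun_apply (cc x y *\<^sub>R b x y) (f y))
        = (\<Sum>y\<in>{y. b x y \<noteq> 0}. blinfun_apply (cc x y *\<^sub>R b x y) (f y))"
      using Sb_fin[of x] by (intro sum.mono_neutral_left) auto
    then show "Mop (p-1) I \<phi> B f x = (\<Sum>y\<in>{y. cc x y *\<^sub>R b x y \<noteq> 0}. blinfun_apply (cc x y *\<^sub>R b x y) (f y))"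
      using Mop_band_expand[OF f, of x] by (simp add: blinfun.scaleR_left)
  qed
qed

lemma cc_close:
  assumes var: "has_variation p I \<phi> r \<epsilon>" and d: "dist x y \<le> r" and e: "0 < \<epsilon>"
  shows "\<bar>cc x y - 1\<bar> < \<epsilon>"
proof -
  let ?N = "nz_support I \<phi> x"
  have pos: "0 < \<phi> i x" if "i \<in> ?N" for i using that rng[of i x] by (auto simp: nz_support_def)
  have "cc x y - 1 = (\<Sum>i\<in>?N. \<phi> i x powr (p-1) * (\<phi> i y - \<phi> i x))"
  proof -
    have "(\<Sum>i\<in>?N. \<phi> i x powr (p-1) * \<phi> i x) = (\<Sum>i\<in>?N. \<phi> i x powr p)"
      by (intro sum.cong refl) (use pos in \<open>simp add: powr_m1\<close>)
    then show ?thesis using sum1[of x] by (simp add: cc_def right_diff_distrib sum_subtractf)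
  qed
  then have "\<bar>cc x y - 1\<bar> \<le> (\<Sum>i\<in>?N. \<phi> i x powr (p-1) * \<bar>\<phi> i y - \<phi> i x\<bar>)"
    by (auto intro!: order.trans[OF sum_abs] sum_mono simp: abs_mult)
  moreover have "(\<Sum>i\<in>?N. \<phi> i x powr (p-1) * \<bar>\<phi> i y - \<phi> i x\<bar>) powr p \<le> (\<Sum>i\<in>?N. \<bar>\<phi> i y - \<phi> i x\<bar> powr p)"
    using nzfin[of x] pos sum1[of x] p1 by (intro jensen_pw) auto
  moreover have "(\<Sum>i\<in>?N. \<bar>\<phi> i y - \<phi> i x\<bar> powr p) \<le> (\<Sum>i\<in>?N \<union> nz_support I \<phi> y. \<bar>\<phi> i x - \<phi> i y\<bar> powr p)"
  proof -
    have "(\<Sum>i\<in>?N. \<bar>\<phi> i y - \<phi> i x\<bar> powr p) = (\<Sum>i\<in>?N. \<bar>\<phi> i x - \<phi> i y\<bar> powr p)"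
      by (intro sum.cong refl) (simp add: abs_minus_commute)
    also have "\<dots> \<le> (\<Sum>i\<in>?N \<union> nz_support I \<phi> y. \<bar>\<phi> i x - \<phi> i y\<bar> powr p)"
      using nzfin[of x] nzfin[of y] by (intro sum_mono2) auto
    finally show ?thesis .
  qed
  moreover have "(\<Sum>i\<in>?N \<union> nz_support I \<phi> y. \<bar>\<phi> i x - \<phi> i y\<bar> powr p) < \<epsilon> powr p"
    using var d unfolding has_variation_def by auto
  ultimately have lt: "(\<Sum>i\<in>?N. \<phi> i x powr (p-1) * \<bar>\<phi> i y - \<phi> i x\<bar>) powr p < \<epsilon> powr p" by linarith
  have "(\<Sum>i\<in>?N. \<phi> i x powr (p-1) * \<bar>\<phi> i y - \<phi> i x\<bar>) < \<epsilon>"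
  proof (rule ccontr)
    assume "\<not> ?thesis"
    then have "\<epsilon> powr p \<le> (\<Sum>i\<in>?N. \<phi> i x powr (p-1) * \<bar>\<phi> i y - \<phi> i x\<bar>) powr p"
      using e p1 by (intro powr_mono2) auto
    then show False using lt by simp
  qed
  with \<open>\<bar>cc x y - 1\<bar> \<le> _\<close> show ?thesis by simp
qed

lemma band_conv:
  fixes f :: "'x \<Rightarrow> 'e"
  assumes var: "has_variation p I \<phi> r \<epsilon>" and Rr: "R \<le> r" and e: "0 < \<epsilon>" and f: "f \<in> lp p"
  shows "(\<lambda>x. Mop (p-1) I \<phi> B f x - B f x) \<in> lp p"
        "Sp p (\<lambda>x. Mop (p-1) I \<phi> B f x - B f x) \<le> ((\<epsilon> * C) powr p * real KR powr p * real KR) * Sp p f"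
proof -
  define d where "d x y = (cc x y - 1) *\<^sub>R b x y" for x y
  have eq: "(\<lambda>x. Mop (p-1) I \<phi> B f x - B f x) = (\<lambda>x. \<Sum>y\<in>{y. b x y \<noteq> 0}. blinfun_apply (d x y) (f y))"
  proof
    fix x
    show "Mop (p-1) I \<phi> B f x - B f x = (\<Sum>y\<in>{y. b x y \<noteq> 0}. blinfun_apply (d x y) (f y))"
      unfolding Mop_band_expand[OF f] Bdef[OF f] d_def
      by (simp add: blinfun.scaleR_left blinfun.diff_left scaleR_diff_left sum_subtractf)
  qed
  have dn: "norm (d x y) \<le> \<epsilon> * C" if "y \<in> {y. b x y \<noteq> 0}" for x y
  proof -
    have "dist x y \<le> r" using bR that Rr by force
    then have "\<bar>cc x y - 1\<bar> \<le> \<epsilon>" using cc_close[OF var _ e] by (simp add: less_imp_le)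
    then show ?thesis unfolding d_def using bC[of x y] e
      by (simp add: mult_mono)
  qed
  note sch = schur[where R=R and K=KR and S="\<lambda>x. {y. b x y \<noteq> 0}" and d=d and \<delta>="\<epsilon> * C" and f=f and p=p, OF finK Sb_sub dn _ f]
  show "(\<lambda>x. Mop (p-1) I \<phi> B f x - B f x) \<in> lp p"
        "Sp p (\<lambda>x. Mop (p-1) I \<phi> B f x - B f x) \<le> ((\<epsilon> * C) powr p * real KR powr p * real KR) * Sp p f"
    unfolding eq using sch e C0 p1 by auto
qed

end
end

lemma bnd_Sp:
  assumes "bnd p T c" "0 \<le> c" "0 < p" "g \<in> lp p"
  shows "T g \<in> lp p" "Sp p (T g) \<le> c powr p * Sp p g"
proof -
  show "T g \<in> lp p" using assms unfolding bnd_def by auto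
  have "lpnorm p (T g) \<le> c * lpnorm p g" using assms unfolding bnd_def by auto
  then have "lpnorm p (T g) powr p \<le> (c * lpnorm p g) powr p"
    using assms by (intro powr_mono2) (auto simp: lpnorm_nonneg)
  then show "Sp p (T g) \<le> c powr p * Sp p g"
    using assms by (simp add: Sp_lpnorm powr_mult lpnorm_nonneg)
qed

lemma phi_f_lp:
  assumes "f \<in> lp p" "0 \<le> a" "a \<le> (1::real)" "\<And>y. 0 \<le> \<phi> y \<and> \<phi> y \<le> 1" "0 < p"
  shows "(\<lambda>y. \<phi> y *\<^sub>R f y) \<in> lp p"
  using assms by (intro lp_dom(1)[OF assms(1), of _ 1]) (auto simp: powr_mult intro!: mult_left_le_one_le powr_le1)

lemma Mop_bnd:
  fixes A :: "('x::metric_space \<Rightarrow> 'e::real_normed_vector) \<Rightarrow> ('x \<Rightarrow> 'e)"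
  assumes p: "1 \<le> p"
    and rng: "\<And>i x. i \<in> I \<Longrightarrow> 0 \<le> \<phi> i x \<and> \<phi> i x \<le> 1"
    and nzfin: "\<And>x. finite (nz_support I \<phi> x)"
    and sum1: "\<And>x. (\<Sum>i\<in>nz_support I \<phi> x. \<phi> i x powr p) = 1"
    and A: "bnd p A c" "0 \<le> c"
  shows "bnd p (Mop (p-1) I \<phi> A) c"
  unfolding bnd_def
proof (intro ballI conjI)
  fix f :: "'x \<Rightarrow> 'e" assume f: "f \<in> lp p"
  have Ab: "\<And>g. g \<in> lp p \<Longrightarrow> A g \<in> lp p \<and> Sp p (A g) \<le> c powr p * Sp p g"
    using bnd_Sp[OF A] p by auto
  note M = Mop_bound[OF p rng nzfin sum1 Ab _ f]
  show "Mop (p-1) I \<phi> A f \<in> lp p" using M by auto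
  have "lpnorm p (Mop (p-1) I \<phi> A f) \<le> (c powr p) powr (1/p) * lpnorm p f"
    using M p by (intro lpnorm_le_of_Sp) auto
  then show "lpnorm p (Mop (p-1) I \<phi> A f) \<le> c * lpnorm p f"
    using p A by (simp add: powr_powr)
qed

lemma Mop_strong':
  fixes A :: "('x::metric_space \<Rightarrow> 'e::real_normed_vector) \<Rightarrow> ('x \<Rightarrow> 'e)"
  assumes p: "1 \<le> p"
    and rng: "\<And>i x. i \<in> I \<Longrightarrow> 0 \<le> \<phi> i x \<and> \<phi> i x \<le> 1"
    and nzfin: "\<And>x. finite (nz_support I \<phi> x)"
    and sum1: "\<And>x. (\<Sum>i\<in>nz_support I \<phi> x. \<phi> i x powr p) = 1"
    and A: "bnd p A c" "0 \<le> c" and f: "f \<in> lp p"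
  shows "((\<lambda>F. lpnorm p (\<lambda>x. Mop (p-1) I \<phi> A f x - (\<Sum>i\<in>F. Mterm (p-1) \<phi> A i f x))) \<longlongrightarrow> 0)
     (finite_subsets_at_top I)"
proof -
  have Ab: "\<And>g. g \<in> lp p \<Longrightarrow> A g \<in> lp p \<and> Sp p (A g) \<le> c powr p * Sp p g"
    using bnd_Sp[OF A] p by auto
  show ?thesis using Mop_strong[OF p rng nzfin sum1 Ab _ f] by auto
qed

lemma lp_diff:
  assumes "f \<in> lp p" "g \<in> lp p" "1 \<le> p"
  shows "(\<lambda>x. f x - g x) \<in> lp p" "lpnorm p (\<lambda>x. f x - g x) \<le> 4 * (lpnorm p f + lpnorm p g)"
proof -
  have g': "(\<lambda>x. (-1) *\<^sub>R g x) \<in> lp p" using lp_scale(1)[OF assms(2)] .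
  have e: "(\<lambda>x. f x + (-1) *\<^sub>R g x) = (\<lambda>x. f x - g x)" by auto
  show "(\<lambda>x. f x - g x) \<in> lp p" using lp_add(1)[OF assms(1) g'] assms(3) e by simp
  show "lpnorm p (\<lambda>x. f x - g x) \<le> 4 * (lpnorm p f + lpnorm p g)"
    using lpnorm_add[OF assms(1) g' assms(3)] lpnorm_scale[OF assms(2), of "-1"] assms(3) e by simp
qed

lemma lpnorm_diff_comm:
  assumes "(\<lambda>x. f x - g x) \<in> lp p" "0 < p"
  shows "lpnorm p (\<lambda>x. g x - f x) = lpnorm p (\<lambda>x. f x - g x)"
proof -
  have "(\<lambda>x. g x - f x) = (\<lambda>x. (-1) *\<^sub>R (f x - g x))" by auto
  then show ?thesis using lpnorm_scale[OF assms(1,2), of "-1"] by simp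
qed

lemma bnd_diff:
  fixes A B :: "('x \<Rightarrow> 'e::real_normed_vector) \<Rightarrow> ('x \<Rightarrow> 'e)"
  assumes "bnd p A a" "bnd p B b" "1 \<le> p"
  shows "bnd p (\<lambda>f x. A f x - B f x) (4 * (a + b))"
  unfolding bnd_def
proof (intro ballI conjI)
  fix f :: "'x \<Rightarrow> 'e" assume f: "f \<in> lp p"
  have A: "A f \<in> lp p" "lpnorm p (A f) \<le> a * lpnorm p f" using assms f unfolding bnd_def by auto
  have B: "B f \<in> lp p" "lpnorm p (B f) \<le> b * lpnorm p f" using assms f unfolding bnd_def by auto
  show "(\<lambda>x. A f x - B f x) \<in> lp p" using lp_diff(1)[OF A(1) B(1) assms(3)] .
  show "lpnorm p (\<lambda>x. A f x - B f x) \<le> 4 * (a + b) * lpnorm p f"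
    using lp_diff(2)[OF A(1) B(1) assms(3)] A(2) B(2) by (simp add: algebra_simps)
qed

lemma homog_diff:
  assumes "homog p A" "homog p B"
  shows "homog p (\<lambda>f x. A f x - B f x)"
  using assms unfolding homog_def by (simp add: scaleR_right_diff_distrib)

lemma Ap_bnd:
  assumes "A \<in> Ap p" "0 < p"
  shows "bnd p A (opnorm p A)" "homog p A" "0 \<le> opnorm p A"
    "\<And>f g. f \<in> lp p \<Longrightarrow> g \<in> lp p \<Longrightarrow> A (\<lambda>x. f x + g x) = (\<lambda>x. A f x + A g x)"
proof -
  have bd: "bdd_op p A" using assms unfolding Ap_def by auto
  then obtain C where C: "\<forall>f\<in>lp p. lpnorm p (A f) \<le> C * lpnorm p f" unfolding bdd_op_def by auto
  have b0: "bnd p A C" using bd C unfolding bdd_op_def bnd_def by auto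
  show h: "homog p A" using bd unfolding bdd_op_def homog_def by auto
  show "bnd p A (opnorm p A)" by (rule bnd_opnorm[OF b0 h assms(2)])
  show "0 \<le> opnorm p A" by (rule opnorm_nonneg[OF b0])
  show "\<And>f g. f \<in> lp p \<Longrightarrow> g \<in> lp p \<Longrightarrow> A (\<lambda>x. f x + g x) = (\<lambda>x. A f x + A g x)"
    using bd unfolding bdd_op_def by auto
qed

lemma Mop_linear:
  "Mop r I \<phi> (\<lambda>g x. a *\<^sub>R A g x + b *\<^sub>R B g x) f = (\<lambda>x. a *\<^sub>R Mop r I \<phi> A f x + b *\<^sub>R Mop r I \<phi> B f x)"
  by (simp add: Mop_def Mterm_def scaleR_add_right sum.distrib scaleR_sum_right mult.commute)

lemma Mop_diff:
  "Mop r I \<phi> (\<lambda>g x. A g x - B g x) = (\<lambda>f x. Mop r I \<phi> A f x - Mop r I \<phi> B f x)"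
  by (simp add: Mop_def Mterm_def scaleR_right_diff_distrib sum_subtractf)

lemma bnd_zero: "bnd p (\<lambda>f x. 0::'e::real_normed_vector) 0"
  unfolding bnd_def by (simp add: lp_zero lpnorm_zero)

lemma bnd_id: "bnd p (\<lambda>f. f) 1"
  unfolding bnd_def by simp

lemma id_Ap:
  assumes E: "\<exists>e::'e::real_normed_vector. e \<noteq> 0" and p: "0 < p"
  shows "(\<lambda>f. f) \<in> (Ap p :: (('x::metric_space \<Rightarrow> 'e) \<Rightarrow> ('x \<Rightarrow> 'e)) set)"
  unfolding Ap_def
proof (intro CollectI conjI allI impI)
  show "bdd_op p (\<lambda>f::'x \<Rightarrow> 'e. f)" unfolding bdd_op_def by (auto intro: exI[of _ 1])
  fix \<epsilon> :: real assume e: "0 < \<epsilon>"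
  obtain e0 :: 'e where e0: "e0 \<noteq> 0" using E by auto
  have idnz: "(id_blinfun :: 'e \<Rightarrow>\<^sub>L 'e) \<noteq> 0"
  proof
    assume "(id_blinfun :: 'e \<Rightarrow>\<^sub>L 'e) = 0"
    then have "blinfun_apply (id_blinfun :: 'e \<Rightarrow>\<^sub>L 'e) e0 = 0" by simp
    then show False using e0 by simp
  qed
  define b :: "'x \<Rightarrow> 'x \<Rightarrow> ('e \<Rightarrow>\<^sub>L 'e)" where "b x y = (if x = y then id_blinfun else 0)" for x y
  have Sx: "{y. b x y \<noteq> 0} = {x}" for x using idnz by (auto simp: b_def)
  have band: "band_op p (\<lambda>f::'x \<Rightarrow> 'e. f)"
    unfolding band_op_def
  proof (intro exI[of _ b] conjI)
    show "\<exists>C. \<forall>x y. norm (b x y) \<le> C" by (intro exI[of _ 1]) (auto simp: b_def norm_blinfun_id_le)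
    show "\<exists>R. \<forall>x y. b x y \<noteq> 0 \<longrightarrow> dist x y \<le> R" by (intro exI[of _ 0]) (auto simp: b_def)
    show "\<forall>f\<in>lp p. f = (\<lambda>x. \<Sum>y\<in>{y. b x y \<noteq> 0}. blinfun_apply (b x y) (f y))"
    proof (intro ballI ext)
      fix f :: "'x \<Rightarrow> 'e" and x
      have "(\<Sum>y\<in>{y. b x y \<noteq> 0}. blinfun_apply (b x y) (f y)) = blinfun_apply (b x x) (f x)"
        unfolding Sx by simp
      then show "f x = (\<Sum>y\<in>{y. b x y \<noteq> 0}. blinfun_apply (b x y) (f y))" by (simp add: b_def)
    qed
  qed
  have "opnorm p (\<lambda>(f::'x \<Rightarrow> 'e) x. f x - f x) \<le> 0"
    using opnorm_le[OF bnd_zero] by simp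
  with band e show "\<exists>B. band_op p B \<and> opnorm p (\<lambda>(f::'x \<Rightarrow> 'e) x. f x - B f x) < \<epsilon>"
    by (intro exI[of _ "\<lambda>f. f"]) auto
qed

lemma opnorm_id:
  assumes E: "\<exists>e::'e::real_normed_vector. e \<noteq> 0" and p: "0 < p"
  shows "opnorm p (\<lambda>f::'x \<Rightarrow> 'e. f) = 1"
proof (rule antisym)
  show "opnorm p (\<lambda>f::'x \<Rightarrow> 'e. f) \<le> 1" by (rule opnorm_le[OF bnd_id]) simp
  obtain e0 :: 'e where e0: "e0 \<noteq> 0" using E by auto
  define x0 :: 'x where "x0 = undefined"
  define f0 :: "'x \<Rightarrow> 'e" where "f0 x = (if x = x0 then (1 / norm e0) *\<^sub>R e0 else 0)" for x
  have nf: "(\<lambda>x. norm (f0 x) powr p) = (\<lambda>x. if x = x0 then 1 else 0)"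
    using e0 p by (auto simp: f0_def)
  have fb: "(\<Sum>x\<in>F. if x = x0 then 1 else 0::real) \<le> 1" for F
    by (cases "finite F") (auto simp: sum.delta)
  have nn: "\<And>x. x \<in> UNIV \<Longrightarrow> 0 \<le> (if x = x0 then 1 else 0::real)" by simp
  note nb = nonneg_fin_bound[OF nn fb]
  have ge: "(\<Sum>x\<in>{x0}. if x = x0 then 1 else 0::real) \<le> infsum (\<lambda>x. if x = x0 then 1 else 0::real) UNIV"
    using nb by (intro fin_le_infsum) auto
  have f0: "f0 \<in> lp p" "Sp p f0 = 1"
    unfolding lp_def Sp_def mem_Collect_eq nf using nb ge by (auto intro: antisym)
  then have "lpnorm p f0 = 1" by (simp add: lpnorm_Sp)
  then show "1 \<le> opnorm p (\<lambda>f::'x \<Rightarrow> 'e. f)"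
    using opnorm_ge[OF bnd_id f0(1)] by simp
qed

lemma Mop_id:
  assumes rng: "\<And>i x. i \<in> I \<Longrightarrow> 0 \<le> \<phi> i x \<and> \<phi> i x \<le> 1"
    and sum1: "\<And>x. (\<Sum>i\<in>nz_support I \<phi> x. \<phi> i x powr p) = 1"
  shows "Mop (p-1) I \<phi> (\<lambda>g. g) = (\<lambda>f::'x \<Rightarrow> 'e::real_normed_vector. f)"
proof (intro ext)
  fix f :: "'x \<Rightarrow> 'e" and x
  have "Mop (p-1) I \<phi> (\<lambda>g. g) f x = (\<Sum>i\<in>nz_support I \<phi> x. (\<phi> i x powr (p-1) * \<phi> i x) *\<^sub>R f x)"
    by (simp add: Mop_def Mterm_def)
  also have "\<dots> = (\<Sum>i\<in>nz_support I \<phi> x. \<phi> i x powr p) *\<^sub>R f x"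
  proof -
    have "(\<Sum>i\<in>nz_support I \<phi> x. (\<phi> i x powr (p-1) * \<phi> i x) *\<^sub>R f x) = (\<Sum>i\<in>nz_support I \<phi> x. (\<phi> i x powr p) *\<^sub>R f x)"
    proof (intro sum.cong refl)
      fix i assume "i \<in> nz_support I \<phi> x"
      then have "0 < \<phi> i x" using rng[of i x] by (auto simp: nz_support_def)
      then show "(\<phi> i x powr (p-1) * \<phi> i x) *\<^sub>R f x = (\<phi> i x powr p) *\<^sub>R f x" by (simp add: powr_m1)
    qed
    then show ?thesis by (simp add: scaleR_sum_left)
  qed
  finally show "Mop (p-1) I \<phi> (\<lambda>g. g) f x = f x" using sum1[of x] by simp
qed

lemma pu_facts:
  assumes "metric_pu p I \<phi>"
  shows "\<And>i x. i \<in> I \<Longrightarrow> 0 \<le> \<phi> i x \<and> \<phi> i x \<le> 1"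
    "\<exists>N::nat. \<forall>x. finite (nz_support I \<phi> x) \<and> card (nz_support I \<phi> x) \<le> N"
    "\<And>x. (\<Sum>i\<in>nz_support I \<phi> x. \<phi> i x powr p) = 1"
  using assms unfolding metric_pu_def by auto

lemma band_data:
  assumes "band_op p B"
  obtains b :: "'x::metric_space \<Rightarrow> 'x \<Rightarrow> ('e::real_normed_vector \<Rightarrow>\<^sub>L 'e)" and C R where
    "\<And>x y. norm (b x y) \<le> C" "\<And>x y. b x y \<noteq> 0 \<Longrightarrow> dist x y \<le> R"
    "\<And>f. f \<in> lp p \<Longrightarrow> B f = (\<lambda>x. \<Sum>y\<in>{y. b x y \<noteq> 0}. blinfun_apply (b x y) (f y))"
proof -
  obtain b :: "'x \<Rightarrow> 'x \<Rightarrow> ('e \<Rightarrow>\<^sub>L 'e)" where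
    h: "(\<exists>C. \<forall>x y. norm (b x y) \<le> C) \<and> (\<exists>R. \<forall>x y. b x y \<noteq> 0 \<longrightarrow> dist x y \<le> R) \<and>
        (\<forall>f\<in>lp p. B f = (\<lambda>x. \<Sum>y\<in>{y. b x y \<noteq> 0}. blinfun_apply (b x y) (f y)))"
    using assms unfolding band_op_def by blast
  then obtain C R where "\<forall>x y. norm (b x y) \<le> C" "\<forall>x y. b x y \<noteq> 0 \<longrightarrow> dist x y \<le> R" by blast
  with h that show thesis by blast
qed

lemma fixed_n:
  fixes I :: "'i set" and \<phi> :: "'i \<Rightarrow> 'x::metric_space \<Rightarrow> real"
  assumes bg: "bounded_geometry TYPE('x)"
    and E: "\<exists>e::'e::banach. e \<noteq> 0"
    and p: "1 < p"
    and pu: "metric_pu p I \<phi>"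
  shows "(\<forall>A\<in>(Ap p :: (('x \<Rightarrow> 'e) \<Rightarrow> ('x \<Rightarrow> 'e)) set).
               (\<forall>f\<in>lp p.
                  ((\<lambda>F. lpnorm p (\<lambda>x. Mop (p-1) I \<phi> A f x
                                        - (\<Sum>i\<in>F. Mterm (p-1) \<phi> A i f x))) \<longlongrightarrow> 0)
                  (finite_subsets_at_top I))
             \<and> Mop (p-1) I \<phi> A \<in> Ap p)
          \<and> (\<forall>A\<in>(Ap p :: (('x \<Rightarrow> 'e) \<Rightarrow> ('x \<Rightarrow> 'e)) set). \<forall>B\<in>Ap p. \<forall>a b::real. \<forall>f\<in>lp p.
               Mop (p-1) I \<phi> (\<lambda>g x. a *\<^sub>R A g x + b *\<^sub>R B g x) f
                 = (\<lambda>x. a *\<^sub>R Mop (p-1) I \<phi> A f x + b *\<^sub>R Mop (p-1) I \<phi> B f x))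
          \<and> Sup {opnorm p (Mop (p-1) I \<phi> A) | A.
                   A \<in> (Ap p :: (('x \<Rightarrow> 'e) \<Rightarrow> ('x \<Rightarrow> 'e)) set) \<and> opnorm p A \<le> 1} = 1"
proof -
  have p0: "0 < p" and p1: "1 \<le> p" using p by auto
  note rng = pu_facts(1)[OF pu]
  obtain N where N: "\<And>x. finite (nz_support I \<phi> x) \<and> card (nz_support I \<phi> x) \<le> N"
    using pu_facts(2)[OF pu] by auto
  have nzfin: "\<And>x. finite (nz_support I \<phi> x)" using N by auto
  have Ncard: "\<And>x. card (nz_support I \<phi> x) \<le> N" using N by auto
  note sum1 = pu_facts(3)[OF pu]
  have phil: "(\<lambda>y. \<phi> i y *\<^sub>R f y) \<in> lp p" if "i \<in> I" "f \<in> lp p" for i and f :: "'x \<Rightarrow> 'e"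
    using phi_f_lp[OF that(2) _ _ _ p0, of 0 "\<phi> i"] rng[OF that(1)] by auto
  have Mbnd: "bnd p (Mop (p-1) I \<phi> A) (opnorm p A)" if A: "A \<in> (Ap p :: (('x \<Rightarrow> 'e) \<Rightarrow> ('x \<Rightarrow> 'e)) set)" for A
    using Mop_bnd[OF p1 rng nzfin sum1 Ap_bnd(1)[OF A p0] Ap_bnd(3)[OF A p0]] .
  have MAp: "Mop (p-1) I \<phi> A \<in> Ap p" if A: "A \<in> (Ap p :: (('x \<Rightarrow> 'e) \<Rightarrow> ('x \<Rightarrow> 'e)) set)" for A
    unfolding Ap_def
  proof (intro CollectI conjI allI impI)
    note Aadd = Ap_bnd(4)[OF A p0]
    have Ah: "homog p A" using Ap_bnd(2)[OF A p0] .
    have hA: "A (\<lambda>x. c *\<^sub>R g x) = (\<lambda>x. c *\<^sub>R A g x)" if g: "g \<in> lp p" for c g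
    proof -
      have "\<forall>c. \<forall>f\<in>lp p. A (\<lambda>x. c *\<^sub>R f x) = (\<lambda>x. c *\<^sub>R A f x)" using Ah unfolding homog_def .
      then have "\<forall>f\<in>lp p. A (\<lambda>x. c *\<^sub>R f x) = (\<lambda>x. c *\<^sub>R A f x)" by (rule spec)
      then show ?thesis using g by (rule bspec)
    qed
    show "bdd_op p (Mop (p-1) I \<phi> A)"
      unfolding bdd_op_def
    proof (intro conjI ballI allI)
      show "Mop (p-1) I \<phi> A ` lp p \<subseteq> lp p" using Mbnd[OF A] unfolding bnd_def by auto
      show "\<exists>C. \<forall>f\<in>lp p. lpnorm p (Mop (p-1) I \<phi> A f) \<le> C * lpnorm p f"
        using Mbnd[OF A] unfolding bnd_def by auto
      fix f g :: "'x \<Rightarrow> 'e" assume f: "f \<in> lp p" and g: "g \<in> lp p"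
      show "Mop (p-1) I \<phi> A (\<lambda>x. f x + g x) = (\<lambda>x. Mop (p-1) I \<phi> A f x + Mop (p-1) I \<phi> A g x)"
      proof
        fix x
        have "Mop (p-1) I \<phi> A (\<lambda>x. f x + g x) x =
          (\<Sum>i\<in>nz_support I \<phi> x. (\<phi> i x powr (p-1)) *\<^sub>R A (\<lambda>y. \<phi> i y *\<^sub>R f y) x + (\<phi> i x powr (p-1)) *\<^sub>R A (\<lambda>y. \<phi> i y *\<^sub>R g y) x)"
          unfolding Mop_def Mterm_def
        proof (intro sum.cong refl)
          fix i assume i: "i \<in> nz_support I \<phi> x"
          then have iI: "i \<in> I" by (simp add: nz_support_def)
          have "(\<lambda>y. \<phi> i y *\<^sub>R (f y + g y)) = (\<lambda>y. \<phi> i y *\<^sub>R f y + \<phi> i y *\<^sub>R g y)"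
            by (simp add: scaleR_add_right)
          then show "(\<phi> i x powr (p-1)) *\<^sub>R A (\<lambda>y. \<phi> i y *\<^sub>R (f y + g y)) x =
            (\<phi> i x powr (p-1)) *\<^sub>R A (\<lambda>y. \<phi> i y *\<^sub>R f y) x + (\<phi> i x powr (p-1)) *\<^sub>R A (\<lambda>y. \<phi> i y *\<^sub>R g y) x"
            using Aadd[OF phil[OF iI f] phil[OF iI g]] by (simp add: scaleR_add_right)
        qed
        then show "Mop (p-1) I \<phi> A (\<lambda>x. f x + g x) x = Mop (p-1) I \<phi> A f x + Mop (p-1) I \<phi> A g x"
          by (simp add: sum.distrib Mop_def Mterm_def)
      qed
    next
      fix c and f :: "'x \<Rightarrow> 'e" assume f: "f \<in> lp p"
      show "Mop (p-1) I \<phi> A (\<lambda>x. c *\<^sub>R f x) = (\<lambda>x. c *\<^sub>R Mop (p-1) I \<phi> A f x)"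
      proof
        fix x
        have "Mop (p-1) I \<phi> A (\<lambda>x. c *\<^sub>R f x) x =
          (\<Sum>i\<in>nz_support I \<phi> x. c *\<^sub>R ((\<phi> i x powr (p-1)) *\<^sub>R A (\<lambda>y. \<phi> i y *\<^sub>R f y) x))"
          unfolding Mop_def Mterm_def
        proof (intro sum.cong refl)
          fix i assume i: "i \<in> nz_support I \<phi> x"
          then have iI: "i \<in> I" by (simp add: nz_support_def)
          have e1: "(\<lambda>y. \<phi> i y *\<^sub>R (c *\<^sub>R f y)) = (\<lambda>y. c *\<^sub>R (\<phi> i y *\<^sub>R f y))"
            by (simp add: mult.commute)
          have e2: "A (\<lambda>y. c *\<^sub>R (\<phi> i y *\<^sub>R f y)) = (\<lambda>y. c *\<^sub>R A (\<lambda>y. \<phi> i y *\<^sub>R f y) y)"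
            by (rule hA[OF phil[OF iI f]])
          show "(\<phi> i x powr (p-1)) *\<^sub>R A (\<lambda>y. \<phi> i y *\<^sub>R (c *\<^sub>R f y)) x =
            c *\<^sub>R ((\<phi> i x powr (p-1)) *\<^sub>R A (\<lambda>y. \<phi> i y *\<^sub>R f y) x)"
            unfolding e1 e2 by (simp add: mult.commute)
        qed
        then show "Mop (p-1) I \<phi> A (\<lambda>x. c *\<^sub>R f x) x = c *\<^sub>R Mop (p-1) I \<phi> A f x"
          by (simp add: Mop_def Mterm_def scaleR_sum_right)
      qed
    qed
  next
    fix \<epsilon> :: real assume e: "0 < \<epsilon>"
    have "\<forall>\<epsilon>>0. \<exists>B. band_op p B \<and> opnorm p (\<lambda>f x. A f x - B f x) < \<epsilon>"
      using A unfolding Ap_def by blast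
    then obtain B where B: "band_op p B" "opnorm p (\<lambda>f x. A f x - B f x) < \<epsilon>"
      using e by blast
    obtain b :: "'x \<Rightarrow> 'x \<Rightarrow> ('e \<Rightarrow>\<^sub>L 'e)" and C R where
      bC: "\<And>x y. norm (b x y) \<le> C" and bR: "\<And>x y. b x y \<noteq> 0 \<Longrightarrow> dist x y \<le> R" and
      Bdef: "\<And>f. f \<in> lp p \<Longrightarrow> B f = (\<lambda>x. \<Sum>y\<in>{y. b x y \<noteq> 0}. blinfun_apply (b x y) (f y))"
      using band_data[OF B(1)] by blast
    obtain KR where KR: "\<And>x::'x. finite (cball x R) \<and> card (cball x R) \<le> KR"
      using bg_cball[OF bg, of R] by auto
    have bandM: "band_op p (Mop (p-1) I \<phi> B)"
      by (rule Mop_band[OF bC bR Bdef KR p1 rng nzfin sum1 Ncard])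
    have Bb: "bnd p B ((C powr p * real KR powr p * real KR) powr (1/p))"
      by (rule band_bnd[OF bC bR Bdef KR p1])
    have Bh: "homog p B" by (rule band_homog[OF bC bR Bdef KR p1])
    have ABb: "bnd p (\<lambda>f x. A f x - B f x) (opnorm p (\<lambda>f x. A f x - B f x))"
      using bnd_opnorm[OF bnd_diff[OF Ap_bnd(1)[OF A p0] Bb p1] homog_diff[OF Ap_bnd(2)[OF A p0] Bh] p0] .
    have o0: "0 \<le> opnorm p (\<lambda>f x. A f x - B f x)" using opnorm_nonneg[OF ABb] .
    have "opnorm p (\<lambda>f x. Mop (p-1) I \<phi> A f x - Mop (p-1) I \<phi> B f x) \<le> opnorm p (\<lambda>f x. A f x - B f x)"
      unfolding Mop_diff[symmetric]
      by (rule opnorm_le[OF Mop_bnd[OF p1 rng nzfin sum1 ABb o0] o0])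
    then show "\<exists>B'. band_op p B' \<and> opnorm p (\<lambda>f x. Mop (p-1) I \<phi> A f x - B' f x) < \<epsilon>"
      using bandM B(2) by (intro exI[of _ "Mop (p-1) I \<phi> B"]) auto
  qed
  have part1: "\<forall>A\<in>(Ap p :: (('x \<Rightarrow> 'e) \<Rightarrow> ('x \<Rightarrow> 'e)) set).
               (\<forall>f\<in>lp p.
                  ((\<lambda>F. lpnorm p (\<lambda>x. Mop (p-1) I \<phi> A f x
                                        - (\<Sum>i\<in>F. Mterm (p-1) \<phi> A i f x))) \<longlongrightarrow> 0)
                  (finite_subsets_at_top I))
             \<and> Mop (p-1) I \<phi> A \<in> Ap p"
  proof (intro ballI conjI)
    fix A :: "('x \<Rightarrow> 'e) \<Rightarrow> ('x \<Rightarrow> 'e)" and f :: "'x \<Rightarrow> 'e" assume A: "A \<in> Ap p" and f: "f \<in> lp p"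
    show "((\<lambda>F. lpnorm p (\<lambda>x. Mop (p-1) I \<phi> A f x - (\<Sum>i\<in>F. Mterm (p-1) \<phi> A i f x))) \<longlongrightarrow> 0)
                  (finite_subsets_at_top I)"
      by (rule Mop_strong'[OF p1 rng nzfin sum1 Ap_bnd(1)[OF A p0] Ap_bnd(3)[OF A p0] f])
  next
    fix A :: "('x \<Rightarrow> 'e) \<Rightarrow> ('x \<Rightarrow> 'e)" assume A: "A \<in> Ap p"
    show "Mop (p-1) I \<phi> A \<in> Ap p" by (rule MAp[OF A])
  qed
  have part2: "\<forall>A\<in>(Ap p :: (('x \<Rightarrow> 'e) \<Rightarrow> ('x \<Rightarrow> 'e)) set). \<forall>B\<in>Ap p. \<forall>a b::real. \<forall>f\<in>lp p.
               Mop (p-1) I \<phi> (\<lambda>g x. a *\<^sub>R A g x + b *\<^sub>R B g x) f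
                 = (\<lambda>x. a *\<^sub>R Mop (p-1) I \<phi> A f x + b *\<^sub>R Mop (p-1) I \<phi> B f x)"
    by (simp add: Mop_linear)
  have part3: "Sup {opnorm p (Mop (p-1) I \<phi> A) | A.
                   A \<in> (Ap p :: (('x \<Rightarrow> 'e) \<Rightarrow> ('x \<Rightarrow> 'e)) set) \<and> opnorm p A \<le> 1} = 1"
  proof (rule cSup_eq_maximum)
    have E': "\<exists>e::'e. e \<noteq> 0" using E .
    have "opnorm p (Mop (p-1) I \<phi> (\<lambda>g::'x \<Rightarrow> 'e. g)) = 1"
      using Mop_id[OF rng sum1, where 'e='e] opnorm_id[OF E' p0, where 'x='x] by simp
    then show "1 \<in> {opnorm p (Mop (p-1) I \<phi> A) | A.
                   A \<in> (Ap p :: (('x \<Rightarrow> 'e) \<Rightarrow> ('x \<Rightarrow> 'e)) set) \<and> opnorm p A \<le> 1}"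
      using id_Ap[OF E' p0, where 'x='x] opnorm_id[OF E' p0, where 'x='x]
      by (intro CollectI exI[of _ "\<lambda>g::'x \<Rightarrow> 'e. g"]) auto
    fix y assume "y \<in> {opnorm p (Mop (p-1) I \<phi> A) | A.
                   A \<in> (Ap p :: (('x \<Rightarrow> 'e) \<Rightarrow> ('x \<Rightarrow> 'e)) set) \<and> opnorm p A \<le> 1}"
    then obtain A :: "('x \<Rightarrow> 'e) \<Rightarrow> ('x \<Rightarrow> 'e)" where A: "A \<in> Ap p" "opnorm p A \<le> 1" "y = opnorm p (Mop (p-1) I \<phi> A)"
      by auto
    have "y \<le> opnorm p A" unfolding A(3) by (rule opnorm_le[OF Mbnd[OF A(1)] Ap_bnd(3)[OF A(1) p0]])
    then show "y \<le> 1" using A(2) by simp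
  qed
  show ?thesis using part1 part2 part3 by blast
qed

lemma conv_part:
  fixes I :: "nat \<Rightarrow> 'i set" and \<phi> :: "nat \<Rightarrow> 'i \<Rightarrow> 'x::metric_space \<Rightarrow> real"
  assumes bg: "bounded_geometry TYPE('x)"
    and p: "1 < p"
    and pu: "\<And>n. n \<ge> 1 \<Longrightarrow> metric_pu p (I n) (\<phi> n)"
    and var: "\<And>n. n \<ge> 1 \<Longrightarrow> has_variation p (I n) (\<phi> n) (real n) (1 / real n)"
    and A: "A \<in> (Ap p :: (('x \<Rightarrow> 'e::real_normed_vector) \<Rightarrow> ('x \<Rightarrow> 'e)) set)"
  shows "(\<lambda>n. opnorm p (\<lambda>f x. Mop (p-1) (I n) (\<phi> n) A f x - A f x)) \<longlonglongrightarrow> 0"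
proof (rule LIMSEQ_I)
  have p0: "0 < p" and p1: "1 \<le> p" using p by auto
  fix e :: real assume e: "0 < e"
  define \<epsilon> where "\<epsilon> = e / 40"
  have \<epsilon>: "0 < \<epsilon>" using e by (simp add: \<epsilon>_def)
  have "\<forall>\<epsilon>>0. \<exists>B. band_op p B \<and> opnorm p (\<lambda>f x. A f x - B f x) < \<epsilon>"
    using A unfolding Ap_def by blast
  then obtain B where B: "band_op p B" "opnorm p (\<lambda>f x. A f x - B f x) < \<epsilon>"
    using \<epsilon> by blast
  obtain b :: "'x \<Rightarrow> 'x \<Rightarrow> ('e \<Rightarrow>\<^sub>L 'e)" and C R where
    bC: "\<And>x y. norm (b x y) \<le> C" and bR: "\<And>x y. b x y \<noteq> 0 \<Longrightarrow> dist x y \<le> R" and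
    Bdef: "\<And>f. f \<in> lp p \<Longrightarrow> B f = (\<lambda>x. \<Sum>y\<in>{y. b x y \<noteq> 0}. blinfun_apply (b x y) (f y))"
    using band_data[OF B(1)] by blast
  obtain KR where KR: "\<And>x::'x. finite (cball x R) \<and> card (cball x R) \<le> KR"
    using bg_cball[OF bg, of R] by auto
  have C0: "0 \<le> C" using bC[of undefined undefined] norm_ge_zero order.trans by blast
  define X where "X = C powr p * real KR powr p * real KR"
  have X0: "0 \<le> X" by (simp add: X_def)
  define Z1 where "Z1 = X powr (1/p)"
  have Z0: "0 \<le> Z1" by (simp add: Z1_def)
  have Bb: "bnd p B ((C powr p * real KR powr p * real KR) powr (1/p))"
    by (rule band_bnd[OF bC bR Bdef KR p1])
  have Bh: "homog p B" by (rule band_homog[OF bC bR Bdef KR p1])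
  define nAB where "nAB = opnorm p (\<lambda>f x. A f x - B f x)"
  have ABb: "bnd p (\<lambda>f x. A f x - B f x) nAB"
    unfolding nAB_def
    using bnd_opnorm[OF bnd_diff[OF Ap_bnd(1)[OF A p0] Bb p1] homog_diff[OF Ap_bnd(2)[OF A p0] Bh] p0] .
  have o0: "0 \<le> nAB" using opnorm_nonneg[OF ABb] by (simp add: nAB_def)
  have nAB\<epsilon>: "nAB < \<epsilon>" using B(2) by (simp add: nAB_def)
  define N0 :: nat where "N0 = nat \<lceil>max R (32 * Z1 / e)\<rceil> + 1"
  have N0R: "R < real N0" unfolding N0_def by linarith
  have N0Z: "32 * Z1 / e < real N0" unfolding N0_def by linarith
  show "\<exists>no. \<forall>n\<ge>no. norm (opnorm p (\<lambda>f x. Mop (p-1) (I n) (\<phi> n) A f x - A f x) - 0) < e"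
  proof (intro exI allI impI)
    fix n assume n: "N0 \<le> n"
    have n1: "1 \<le> n" using n by (simp add: N0_def)
    have Rn: "R \<le> real n" using N0R n by linarith
    define \<delta> where "\<delta> = 1 / real n"
    have \<delta>0: "0 < \<delta>" using n1 by (simp add: \<delta>_def)
    have \<delta>Z: "16 * (\<delta> * Z1) < e / 2"
    proof -
      have "32 * Z1 / e < real n" using N0Z n by linarith
      then have "32 * Z1 < real n * e" using e by (simp add: divide_less_eq)
      then show ?thesis using n1 e by (simp add: \<delta>_def field_simps)
    qed
    note pf = pu_facts[OF pu[OF n1]]
    have rng: "\<And>i x. i \<in> I n \<Longrightarrow> 0 \<le> \<phi> n i x \<and> \<phi> n i x \<le> 1" using pf(1) .
    have nzfin: "\<And>x. finite (nz_support (I n) (\<phi> n) x)" using pf(2) by blast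
    have sum1: "\<And>x. (\<Sum>i\<in>nz_support (I n) (\<phi> n) x. \<phi> n i x powr p) = 1" using pf(3) .
    have var': "has_variation p (I n) (\<phi> n) (real n) \<delta>" using var[OF n1] by (simp add: \<delta>_def)
    have MAB: "bnd p (Mop (p-1) (I n) (\<phi> n) (\<lambda>f x. A f x - B f x)) nAB"
      by (rule Mop_bnd[OF p1 rng nzfin sum1 ABb o0])
    define Kt where "Kt = 20 * nAB + 16 * (\<delta> * Z1)"
    have Kt0: "0 \<le> Kt" using o0 \<delta>0 Z0 by (simp add: Kt_def)
    have "bnd p (\<lambda>f x. Mop (p-1) (I n) (\<phi> n) A f x - A f x) Kt"
      unfolding bnd_def
    proof (intro ballI conjI)
      fix f :: "'x \<Rightarrow> 'e" assume f: "f \<in> lp p"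
      define u1 where "u1 = Mop (p-1) (I n) (\<phi> n) (\<lambda>f x. A f x - B f x) f"
      define u2 where "u2 = (\<lambda>x. Mop (p-1) (I n) (\<phi> n) B f x - B f x)"
      define u3 where "u3 = (\<lambda>x. B f x - A f x)"
      have u1: "u1 \<in> lp p" "lpnorm p u1 \<le> nAB * lpnorm p f" using MAB f unfolding bnd_def u1_def by auto
      note bc = band_conv[OF bC bR Bdef KR p1 rng nzfin sum1 var' Rn \<delta>0 f]
      have u2: "u2 \<in> lp p" using bc by (simp add: u2_def)
      have "lpnorm p u2 \<le> ((\<delta> * C) powr p * real KR powr p * real KR) powr (1/p) * lpnorm p f"
        unfolding u2_def using bc \<delta>0 C0 p0 by (intro lpnorm_le_of_Sp) auto
      also have "((\<delta> * C) powr p * real KR powr p * real KR) powr (1/p) = \<delta> * Z1"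
        using \<delta>0 C0 p0 by (simp add: Z1_def X_def powr_mult powr_powr)
      finally have u2n: "lpnorm p u2 \<le> \<delta> * Z1 * lpnorm p f" .
      have ABf: "(\<lambda>x. A f x - B f x) \<in> lp p" "lpnorm p (\<lambda>x. A f x - B f x) \<le> nAB * lpnorm p f"
        using ABb f unfolding bnd_def by auto
      have u3: "u3 \<in> lp p" "lpnorm p u3 \<le> nAB * lpnorm p f"
        using lpnorm_diff_comm[OF ABf(1) p0] ABf lp_scale(1)[OF ABf(1), of "-1"]
        by (auto simp: u3_def)
      have eq: "(\<lambda>x. Mop (p-1) (I n) (\<phi> n) A f x - A f x) = (\<lambda>x. u1 x + (\<lambda>x. u2 x + u3 x) x)"
        by (auto simp: u1_def u2_def u3_def Mop_diff)
      have u23: "(\<lambda>x. u2 x + u3 x) \<in> lp p" "lpnorm p (\<lambda>x. u2 x + u3 x) \<le> 4 * (lpnorm p u2 + lpnorm p u3)"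
        using lp_add(1)[OF u2 u3(1) p0] lpnorm_add[OF u2 u3(1) p1] by auto
      show "(\<lambda>x. Mop (p-1) (I n) (\<phi> n) A f x - A f x) \<in> lp p"
        unfolding eq using lp_add(1)[OF u1(1) u23(1) p0] .
      have "lpnorm p (\<lambda>x. Mop (p-1) (I n) (\<phi> n) A f x - A f x) \<le> 4 * (lpnorm p u1 + lpnorm p (\<lambda>x. u2 x + u3 x))"
        unfolding eq by (rule lpnorm_add[OF u1(1) u23(1) p1])
      also have "\<dots> \<le> 4 * (nAB * lpnorm p f + 4 * (\<delta> * Z1 * lpnorm p f + nAB * lpnorm p f))"
        using u1(2) u23(2) u2n u3(2) by (smt (verit))
      also have "\<dots> = Kt * lpnorm p f" by (simp add: Kt_def algebra_simps)
      finally show "lpnorm p (\<lambda>x. Mop (p-1) (I n) (\<phi> n) A f x - A f x) \<le> Kt * lpnorm p f" .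
    qed
    then have "0 \<le> opnorm p (\<lambda>f x. Mop (p-1) (I n) (\<phi> n) A f x - A f x)"
      "opnorm p (\<lambda>f x. Mop (p-1) (I n) (\<phi> n) A f x - A f x) \<le> Kt"
      using opnorm_nonneg opnorm_le Kt0 by auto
    moreover have "Kt < e" using nAB\<epsilon> \<delta>Z by (simp add: Kt_def \<epsilon>_def)
    ultimately show "norm (opnorm p (\<lambda>f x. Mop (p-1) (I n) (\<phi> n) A f x - A f x) - 0) < e" by simp
  qed
qed

theorem corollary6p5:
  fixes p q :: real
    and I :: "nat \<Rightarrow> 'i set"
    and \<phi> :: "nat \<Rightarrow> 'i \<Rightarrow> 'x::metric_space \<Rightarrow> real"
  assumes sd: "strongly_discrete TYPE('x)"
    and bg: "bounded_geometry TYPE('x)"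
    and pA: "property_A TYPE('x) p"
    and E_nontriv: "\<exists>e::'e::banach. e \<noteq> 0"
    and p: "1 < p" and q: "1/p + 1/q = 1"
    and pu: "\<And>n. n \<ge> 1 \<Longrightarrow> metric_pu p (I n) (\<phi> n)"
    and var: "\<And>n. n \<ge> 1 \<Longrightarrow> has_variation p (I n) (\<phi> n) (real n) (1 / real n)"
  shows "(\<forall>n\<ge>1.
            (\<forall>A\<in>(Ap p :: (('x \<Rightarrow> 'e) \<Rightarrow> ('x \<Rightarrow> 'e)) set).
               (\<forall>f\<in>lp p.
                  ((\<lambda>F. lpnorm p (\<lambda>x. Mop (p/q) (I n) (\<phi> n) A f x
                                        - (\<Sum>i\<in>F. Mterm (p/q) (\<phi> n) A i f x))) \<longlongrightarrow> 0)
                  (finite_subsets_at_top (I n)))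
             \<and> Mop (p/q) (I n) (\<phi> n) A \<in> Ap p)
          \<and> (\<forall>A\<in>(Ap p :: (('x \<Rightarrow> 'e) \<Rightarrow> ('x \<Rightarrow> 'e)) set). \<forall>B\<in>Ap p. \<forall>a b::real. \<forall>f\<in>lp p.
               Mop (p/q) (I n) (\<phi> n) (\<lambda>g x. a *\<^sub>R A g x + b *\<^sub>R B g x) f
                 = (\<lambda>x. a *\<^sub>R Mop (p/q) (I n) (\<phi> n) A f x + b *\<^sub>R Mop (p/q) (I n) (\<phi> n) B f x))
          \<and> Sup {opnorm p (Mop (p/q) (I n) (\<phi> n) A) | A.
                   A \<in> (Ap p :: (('x \<Rightarrow> 'e) \<Rightarrow> ('x \<Rightarrow> 'e)) set) \<and> opnorm p A \<le> 1} = 1)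
       \<and> (\<forall>A\<in>(Ap p :: (('x \<Rightarrow> 'e) \<Rightarrow> ('x \<Rightarrow> 'e)) set).
            (\<lambda>n. opnorm p (\<lambda>f x. Mop (p/q) (I n) (\<phi> n) A f x - A f x)) \<longlonglongrightarrow> 0)"
proof -
  have pq: "p / q = p - 1"
  proof -
    have "1/q = 1 - 1/p" using q by linarith
    moreover have "p / q = p * (1/q)" by simp
    ultimately have "p / q = p * (1 - 1/p)" by simp
    also have "\<dots> = p - 1" using p by (simp add: field_simps)
    finally show ?thesis .
  qed
  have part1: "\<forall>n\<ge>1.
            (\<forall>A\<in>(Ap p :: (('x \<Rightarrow> 'e) \<Rightarrow> ('x \<Rightarrow> 'e)) set).
               (\<forall>f\<in>lp p.
                  ((\<lambda>F. lpnorm p (\<lambda>x. Mop (p-1) (I n) (\<phi> n) A f x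
                                        - (\<Sum>i\<in>F. Mterm (p-1) (\<phi> n) A i f x))) \<longlongrightarrow> 0)
                  (finite_subsets_at_top (I n)))
             \<and> Mop (p-1) (I n) (\<phi> n) A \<in> Ap p)
          \<and> (\<forall>A\<in>(Ap p :: (('x \<Rightarrow> 'e) \<Rightarrow> ('x \<Rightarrow> 'e)) set). \<forall>B\<in>Ap p. \<forall>a b::real. \<forall>f\<in>lp p.
               Mop (p-1) (I n) (\<phi> n) (\<lambda>g x. a *\<^sub>R A g x + b *\<^sub>R B g x) f
                 = (\<lambda>x. a *\<^sub>R Mop (p-1) (I n) (\<phi> n) A f x + b *\<^sub>R Mop (p-1) (I n) (\<phi> n) B f x))
          \<and> Sup {opnorm p (Mop (p-1) (I n) (\<phi> n) A) | A.
                   A \<in> (Ap p :: (('x \<Rightarrow> 'e) \<Rightarrow> ('x \<Rightarrow> 'e)) set) \<and> opnorm p A \<le> 1} = 1"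
  proof (intro allI impI)
    fix n :: nat assume n: "1 \<le> n"
    show "(\<forall>A\<in>(Ap p :: (('x \<Rightarrow> 'e) \<Rightarrow> ('x \<Rightarrow> 'e)) set).
               (\<forall>f\<in>lp p.
                  ((\<lambda>F. lpnorm p (\<lambda>x. Mop (p-1) (I n) (\<phi> n) A f x
                                        - (\<Sum>i\<in>F. Mterm (p-1) (\<phi> n) A i f x))) \<longlongrightarrow> 0)
                  (finite_subsets_at_top (I n)))
             \<and> Mop (p-1) (I n) (\<phi> n) A \<in> Ap p)
          \<and> (\<forall>A\<in>(Ap p :: (('x \<Rightarrow> 'e) \<Rightarrow> ('x \<Rightarrow> 'e)) set). \<forall>B\<in>Ap p. \<forall>a b::real. \<forall>f\<in>lp p.
               Mop (p-1) (I n) (\<phi> n) (\<lambda>g x. a *\<^sub>R A g x + b *\<^sub>R B g x) f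
                 = (\<lambda>x. a *\<^sub>R Mop (p-1) (I n) (\<phi> n) A f x + b *\<^sub>R Mop (p-1) (I n) (\<phi> n) B f x))
          \<and> Sup {opnorm p (Mop (p-1) (I n) (\<phi> n) A) | A.
                   A \<in> (Ap p :: (('x \<Rightarrow> 'e) \<Rightarrow> ('x \<Rightarrow> 'e)) set) \<and> opnorm p A \<le> 1} = 1"
      by (rule fixed_n[OF bg E_nontriv p pu[OF n]])
  qed
  have part2: "\<forall>A\<in>(Ap p :: (('x \<Rightarrow> 'e) \<Rightarrow> ('x \<Rightarrow> 'e)) set).
            (\<lambda>n. opnorm p (\<lambda>f x. Mop (p-1) (I n) (\<phi> n) A f x - A f x)) \<longlonglongrightarrow> 0"
    using conv_part[OF bg p pu var] by blast
  show ?thesis unfolding pq using part1 part2 by (rule conjI)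
qed

end
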